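(* For every $p\ge3$, $\check\beta_p<\tilde\beta_p$, and the set $\mathscr C_p^+$ of points $(\beta,h)\in[0,\infty)\times\mathbb R$ for which $H_{\beta,h,p}$ has exactly two global maximizers is described as follows. (1) If $p\ge4$ is even, there is a continuous function $\varphi_p:(\check\beta_p,\infty)\to[0,\infty)$, strictly decreasing on $(\check\beta_p,\tilde\beta_p)$ and vanishing on $[\tilde\beta_p,\infty)$, such that $\mathscr C_p^+=\{(\beta,\pm\varphi_p(\beta)):\beta\in(\check\beta_p,\infty)\setminus\{\tilde\beta_p\}\}$. (2) If $p\ge3$ is odd, there is a strictly decreasing continuous function $\varphi_p:(\check\beta_p,\infty)\to\mathbb R$ with $\varphi_p(\tilde\beta_p)=0$ and $\lim_{\beta\to\infty}\varphi_p(\beta)=-\infty$ such that $\mathscr C_p^+=\{(\beta,\varphi_p(\beta)):\beta\in(\check\beta_p,\infty)\}$. In both cases $\lim_{\beta\to\check\beta_p^+}\varphi_p(\beta)=\tanh^{-1}(m_* )-p\check\beta_pm_*^{p-1}$ with $m_*=\sqrt{(p-2)/p}$.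
   Context: $I(x)=\frac12[(1+x)\log(1+x)+(1-x)\log(1-x)]$, $H_{\beta,h,p}(x)=\beta x^p+hx-I(x)$ on $[-1,1]$; global maximizers are points attaining $\sup_{[-1,1]}H_{\beta,h,p}$. $\tilde\beta_p=\sup\{\beta\ge0:\sup_{x\in[-1,1]}H_{\beta,0,p}(x)=0\}$ and $\check\beta_p=\frac{1}{2(p-1)}\big(\frac{p}{p-2}\big)^{(p-2)/2}$. *)

theory Defs
  imports "HOL-Analysis.Analysis"
begin

text \<open>Entropy function; at x = 1 or x = -1 the term 0 * ln 0 is 0 (convention 0 log 0 = 0).\<close>
definition Ient :: "real \<Rightarrow> real" where
  "Ient x = (1/2) * ((1 + x) * ln (1 + x) + (1 - x) * ln (1 - x))"

definition Hfun :: "real \<Rightarrow> real \<Rightarrow> nat \<Rightarrow> real \<Rightarrow> real" where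
  "Hfun \<beta> h p x = \<beta> * x ^ p + h * x - Ient x"

definition global_maximizers :: "real \<Rightarrow> real \<Rightarrow> nat \<Rightarrow> real set" where
  "global_maximizers \<beta> h p =
     {x \<in> {-1..1}. \<forall>y \<in> {-1..1}. Hfun \<beta> h p y \<le> Hfun \<beta> h p x}"

definition beta_tilde :: "nat \<Rightarrow> real" where
  "beta_tilde p = Sup {\<beta>. \<beta> \<ge> 0 \<and> Sup (Hfun \<beta> 0 p ` {-1..1}) = 0}"

definition beta_check :: "nat \<Rightarrow> real" where
  "beta_check p = 1 / (2 * (real p - 1)) * (real p / (real p - 2)) powr ((real p - 2) / 2)"

definition Cplus :: "nat \<Rightarrow> (real \<times> real) set" where
  "Cplus p = {(\<beta>, h). \<beta> \<ge> 0 \<and> card (global_maximizers \<beta> h p) = 2}"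

end

theory Submission
  imports Defs "HOL-Real_Asymp.Real_Asymp"
begin

lemma xlnx_cont: "continuous_on {0..} (\<lambda>t::real. t * ln t)"
proof (rule continuous_on_eq_continuous_within[THEN iffD2], intro ballI)
  fix x :: real assume x: "x \<in> {0..}"
  show "continuous (at x within {0..}) (\<lambda>t. t * ln t)"
  proof (cases "x = 0")
    case True
    have c0: "((\<lambda>t::real. t * ln t) \<longlongrightarrow> 0) (at_right 0)" by real_asymp
    then show ?thesis using True by (simp add: at_within_Ici_at_right continuous_within)
  next
    case False
    then have "x > 0" using x by auto
    then have "isCont (\<lambda>t. t * ln t) x" by (intro continuous_intros) auto
    then show ?thesis by (rule continuous_at_imp_continuous_within)
  qed
qed

lemma Ient_cont: "continuous_on {-1..1} Ient"
proof -
  have e: "Ient = (\<lambda>x. (1/2) * ((\<lambda>t. t * ln t) (1 + x) + (\<lambda>t. t * ln t) (1 - x)))"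
    by (simp add: Ient_def fun_eq_iff)
  have c1: "continuous_on {-1..1} (\<lambda>x::real. (\<lambda>t. t * ln t) (1 + x))"
    by (rule continuous_on_compose2[OF xlnx_cont]) (auto intro!: continuous_intros)
  have c2: "continuous_on {-1..1} (\<lambda>x::real. (\<lambda>t. t * ln t) (1 - x))"
    by (rule continuous_on_compose2[OF xlnx_cont]) (auto intro!: continuous_intros)
  show ?thesis unfolding e by (intro continuous_intros c1 c2)
qed

lemma Ient_deriv: "\<bar>x\<bar> < 1 \<Longrightarrow> (Ient has_real_derivative artanh x) (at x)"
proof -
  assume a: "\<bar>x\<bar> < 1"
  have p1: "1 + x > 0" "1 - x > 0" using a by auto
  have "(Ient has_real_derivative (1/2) * ((1 * ln (1+x) + (1+x) * (1 / (1+x))) + ((-1) * ln (1 - x) + (1-x) * (-1 / (1-x))))) (at x)"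
    unfolding Ient_def[abs_def] using p1
    by (auto intro!: derivative_eq_intros)
  moreover have "(1/2) * ((1 * ln (1+x) + (1+x) * (1 / (1+x))) + ((-1) * ln (1 - x) + (1-x) * (-1 / (1-x)))) = (1/2) * ((ln (1+x) + 1) + (- ln (1 - x) - 1))"
    using p1 by simp
  moreover have "(1/2) * ((ln (1+x) + 1) + (- ln (1 - x) - 1)) = artanh x"
    using p1 by (simp add: artanh_def ln_div)
  ultimately show ?thesis by simp
qed

lemma Ient_1: "Ient 1 = ln 2" by (simp add: Ient_def)
lemma Ient_m1: "Ient (-1) = ln 2" by (simp add: Ient_def)
lemma Ient_minus: "Ient (-x) = Ient x" by (simp add: Ient_def algebra_simps)

lemma tlnt_ge: "t \<ge> 0 \<Longrightarrow> t * ln t \<ge> t - (1::real)"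
proof -
  assume t: "t \<ge> 0"
  show ?thesis
  proof (cases "t = 0")
    case False
    then have "t > 0" using t by auto
    have "ln (1/t) \<le> 1/t - 1" using \<open>t>0\<close> by (intro ln_le_minus_one) auto
    then have "- ln t \<le> 1/t - 1" using \<open>t>0\<close> by (simp add: ln_div)
    then have "t * (- ln t) \<le> t * (1/t - 1)" using \<open>t>0\<close> by (intro mult_left_mono) auto
    then show ?thesis using \<open>t>0\<close> by (simp add: algebra_simps)
  qed simp
qed

lemma Ient_nonneg: "x \<in> {-1..1} \<Longrightarrow> Ient x \<ge> 0"
  using tlnt_ge[of "1+x"] tlnt_ge[of "1-x"] by (auto simp: Ient_def)

lemma Hfun_deriv: "\<bar>y\<bar> < 1 \<Longrightarrow> (Hfun \<beta> h p has_real_derivative (real p * \<beta> * y^(p-1) + h - artanh y)) (at y)"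
proof -
  assume a: "\<bar>y\<bar> < 1"
  have "((\<lambda>x. \<beta> * x ^ p + h * x - Ient x) has_real_derivative (\<beta> * (of_nat p * y^(p-1)) + h * 1 - artanh y)) (at y)"
    by (auto intro!: derivative_eq_intros Ient_deriv[OF a])
  then show ?thesis unfolding Hfun_def[abs_def] by (simp add: algebra_simps)
qed

lemma Hfun_cont: "continuous_on {-1..1} (Hfun \<beta> h p)"
  unfolding Hfun_def[abs_def] by (intro continuous_intros Ient_cont)

locale PP = fixes p :: nat assumes p3: "3 \<le> p"
begin

abbreviation H where "H \<beta> h \<equiv> Hfun \<beta> h p"
abbreviation GM where "GM \<beta> h \<equiv> global_maximizers \<beta> h p"
abbreviation bc where "bc \<equiv> beta_check p"
abbreviation bt where "bt \<equiv> beta_tilde p"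

definition Hp :: "real \<Rightarrow> real \<Rightarrow> real \<Rightarrow> real" where "Hp \<beta> h y = real p * \<beta> * y^(p-1) + h - artanh y"
definition Hpp :: "real \<Rightarrow> real \<Rightarrow> real" where "Hpp \<beta> y = real p * (real p - 1) * \<beta> * y^(p-2) - 1/(1-y^2)"
definition kf :: "real \<Rightarrow> real" where "kf y = y^(p-2) * (1 - y^2)"
definition ms :: real where "ms = sqrt((real p - 2)/real p)"
definition lo :: real where "lo = (if even p then 0 else -1)"

lemma H_deriv: "\<bar>y\<bar> < 1 \<Longrightarrow> (H \<beta> h has_real_derivative Hp \<beta> h y) (at y)"
  unfolding Hp_def by (rule Hfun_deriv)

lemma Hp_deriv: "\<bar>y\<bar> < 1 \<Longrightarrow> (Hp \<beta> h has_real_derivative Hpp \<beta> y) (at y)"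
proof -
  assume a: "\<bar>y\<bar> < 1"
  have "((\<lambda>y. real p * \<beta> * y^(p-1) + h - artanh y) has_real_derivative
     (real p * \<beta> * (of_nat (p-1) * y^(p-1-1)) + 0 - 1 / (1 - y ^ 2))) (at y)"
    by (auto intro!: derivative_eq_intros artanh_real_has_field_derivative a)
  moreover have "real p * \<beta> * (of_nat (p-1) * y^(p-1-1)) + 0 - 1 / (1 - y ^ 2) = Hpp \<beta> y"
    using p3 by (simp add: Hpp_def of_nat_diff numeral_2_eq_2)
  ultimately show ?thesis unfolding Hp_def[abs_def] by simp
qed

lemma Hp_cont: "-1 < a \<Longrightarrow> b < 1 \<Longrightarrow> continuous_on {a..b} (Hp \<beta> h)"
  by (intro continuous_at_imp_continuous_on ballI DERIV_isCont[OF Hp_deriv]) auto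

lemma H_cont: "{a..b} \<subseteq> {-1..1} \<Longrightarrow> continuous_on {a..b} (H \<beta> h)"
  using Hfun_cont continuous_on_subset by blast

lemma Hp_strict_dec:
  assumes "-1 < a" "a < b" "b < 1" "\<And>z. a < z \<Longrightarrow> z < b \<Longrightarrow> Hpp \<beta> z < 0"
  shows "Hp \<beta> h b < Hp \<beta> h a"
  apply (rule DERIV_neg_imp_decreasing_open[OF assms(2) _ Hp_cont])
  using assms Hp_deriv by (auto intro!: exI[of _ "Hpp \<beta> _"])

lemma H_strict_inc:
  assumes "-1 \<le> a" "a < b" "b \<le> 1" "\<And>z. a < z \<Longrightarrow> z < b \<Longrightarrow> Hp \<beta> h z > 0"
  shows "H \<beta> h a < H \<beta> h b"
  apply (rule DERIV_pos_imp_increasing_open[OF assms(2) _ H_cont])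
  using assms H_deriv by (auto intro!: exI[of _ "Hp \<beta> h _"])

lemma H_strict_dec:
  assumes "-1 \<le> a" "a < b" "b \<le> 1" "\<And>z. a < z \<Longrightarrow> z < b \<Longrightarrow> Hp \<beta> h z < 0"
  shows "H \<beta> h b < H \<beta> h a"
  apply (rule DERIV_neg_imp_decreasing_open[OF assms(2) _ H_cont])
  using assms H_deriv by (auto intro!: exI[of _ "Hp \<beta> h _"])

lemma Hpp_kf: "\<bar>y\<bar> < 1 \<Longrightarrow> Hpp \<beta> y * (1 - y^2) = real p * (real p - 1) * \<beta> * kf y - 1"
proof -
  assume a: "\<bar>y\<bar> < 1"
  then have "1 - y^2 > 0" by (simp add: abs_square_less_1)
  then show ?thesis by (simp add: Hpp_def kf_def field_simps)
qed

lemma Hpp_neg_iff: "\<bar>y\<bar> < 1 \<Longrightarrow> Hpp \<beta> y < 0 \<longleftrightarrow> real p * (real p - 1) * \<beta> * kf y < 1"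
proof -
  assume a: "\<bar>y\<bar> < 1"
  then have d: "1 - y^2 > 0" by (simp add: abs_square_less_1)
  have "Hpp \<beta> y < 0 \<longleftrightarrow> Hpp \<beta> y * (1 - y^2) < 0" using d by (simp add: mult_less_0_iff)
  then show ?thesis using Hpp_kf[OF a] by simp
qed

lemma Hpp_pos_iff: "\<bar>y\<bar> < 1 \<Longrightarrow> Hpp \<beta> y > 0 \<longleftrightarrow> real p * (real p - 1) * \<beta> * kf y > 1"
proof -
  assume a: "\<bar>y\<bar> < 1"
  then have d: "1 - y^2 > 0" by (simp add: abs_square_less_1)
  have "Hpp \<beta> y > 0 \<longleftrightarrow> Hpp \<beta> y * (1 - y^2) > 0" using d by (simp add: zero_less_mult_iff)
  then show ?thesis using Hpp_kf[OF a] by simp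
qed

lemma ms_pos: "0 < ms" and ms_lt1: "ms < 1"
proof -
  have p: "real p \<ge> 3" using p3 by simp
  have "(real p - 2) / real p > 0" using p by simp
  then show "0 < ms" unfolding ms_def by simp
  have "(real p - 2) / real p < 1" using p by simp
  then show "ms < 1" unfolding ms_def by (simp add: real_sqrt_less_iff)
qed

lemma ms_sq: "ms^2 = (real p - 2) / real p"
  using p3 unfolding ms_def by simp

lemma kf_deriv: "(kf has_real_derivative (y^(p-3) * ((real p - 2) - real p * y^2))) (at y)"
proof -
  have e: "kf = (\<lambda>y. y^(p-2) - y^p)"
  proof
    fix y :: real
    have "y^(p-2) * y^2 = y^(p-2+2)" by (rule power_add[symmetric])
    also have "p-2+2 = p" using p3 by simp
    finally have "y^(p-2) * y^2 = y^p" .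
    then show "kf y = y^(p-2) - y^p" by (simp add: kf_def algebra_simps)
  qed
  have "((\<lambda>y. y^(p-2) - y^p) has_real_derivative (of_nat (p-2) * y^(p-2-1) - of_nat p * y^(p-1))) (at y)"
    by (auto intro!: derivative_eq_intros)
  moreover have "of_nat (p-2) * y^(p-2-1) - of_nat p * y^(p-1) = y^(p-3) * ((real p - 2) - real p * y^2)"
  proof -
    have "y^(p-3) * y^2 = y^(p-3+2)" by (rule power_add[symmetric])
    also have "p-3+2 = p - 1" using p3 by simp
    finally have "y^(p-1) = y^(p-3) * y^2" by simp
    moreover have "p - 2 - 1 = p - 3" by simp
    ultimately show ?thesis using p3 by (simp add: of_nat_diff algebra_simps)
  qed
  ultimately show ?thesis unfolding e by simp
qed

lemma kf_cont: "continuous_on S kf"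
  unfolding kf_def[abs_def] by (auto intro!: continuous_intros)

lemma kf_inc: "0 \<le> a \<Longrightarrow> a < b \<Longrightarrow> b \<le> ms \<Longrightarrow> kf a < kf b"
proof -
  assume ab: "0 \<le> a" "a < b" "b \<le> ms"
  show ?thesis
  proof (rule DERIV_pos_imp_increasing_open[OF ab(2) _ kf_cont])
    fix x assume x: "a < x" "x < b"
    have "x^2 < ms^2" using x ab by (intro power_strict_mono) auto
    then have "(real p - 2) - real p * x^2 > 0" using p3 unfolding ms_sq by (simp add: field_simps)
    moreover have "x^(p-3) > 0" using x ab by simp
    ultimately show "\<exists>y. (kf has_real_derivative y) (at x) \<and> 0 < y"
      using kf_deriv by (intro exI[of _ "x^(p-3) * ((real p - 2) - real p * x^2)"]) auto
  qed
qed

lemma kf_dec: "ms \<le> a \<Longrightarrow> a < b \<Longrightarrow> kf b < kf a"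
proof -
  assume ab: "ms \<le> a" "a < b"
  show ?thesis
  proof (rule DERIV_neg_imp_decreasing_open[OF ab(2) _ kf_cont])
    fix x assume x: "a < x" "x < b"
    have "ms^2 < x^2" using x ab ms_pos by (intro power_strict_mono) auto
    then have "(real p - 2) - real p * x^2 < 0" using p3 unfolding ms_sq by (simp add: field_simps)
    moreover have "x^(p-3) > 0" using x ab ms_pos by simp
    ultimately show "\<exists>y. (kf has_real_derivative y) (at x) \<and> y < 0"
      using kf_deriv by (intro exI[of _ "x^(p-3) * ((real p - 2) - real p * x^2)"]) (auto simp: mult_pos_neg)
  qed
qed

lemma bc_kf: "real p * (real p - 1) * bc * kf ms = 1"
proof -
  define q where "q = real p"
  have q3: "q \<ge> 3" using p3 by (simp add: q_def)
  define r where "r = (q - 2) / q"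
  have r: "r > 0" using q3 by (simp add: r_def)
  have ms_r: "ms = sqrt r" by (simp add: ms_def r_def q_def)
  have "ms^(p-2) = (r powr (1/2)) ^ (p-2)" using r by (simp add: ms_r powr_half_sqrt)
  also have "\<dots> = r powr ((q - 2)/2)" using r p3
    by (simp add: powr_realpow[symmetric] powr_powr q_def of_nat_diff)
  finally have m1: "ms^(p-2) = r powr ((q - 2)/2)" .
  have m2: "1 - ms^2 = 2 / q" using q3 by (simp add: ms_sq q_def[symmetric] field_simps)
  have bc_eq: "bc = 1 / (2 * (q - 1)) * (q / (q - 2)) powr ((q - 2) / 2)"
    by (simp add: beta_check_def q_def)
  have "(q / (q - 2)) powr ((q - 2) / 2) * r powr ((q - 2)/2) = (q / (q - 2) * r) powr ((q - 2)/2)"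
    using r q3 powr_mult[of "q/(q-2)" r "(q-2)/2"] by simp
  also have "q / (q - 2) * r = 1" using q3 by (simp add: r_def field_simps)
  finally have pr: "(q / (q - 2)) powr ((q - 2) / 2) * r powr ((q - 2)/2) = 1" by simp
  have c: "q * (q - 1) * (1 / (2 * (q - 1))) * (2 / q) = 1" using q3 by (simp add: field_simps)
  have "real p * (real p - 1) * bc * kf ms
     = (q * (q - 1) * (1 / (2 * (q - 1))) * (2 / q)) * ((q / (q - 2)) powr ((q - 2) / 2) * r powr ((q - 2)/2))"
    unfolding kf_def m1 m2 bc_eq q_def[symmetric] using q3 by (simp add: field_simps)
  also have "\<dots> = 1" unfolding c pr by simp
  finally show ?thesis .
qed

lemma bc_pos: "bc > 0"
  using p3 by (simp add: beta_check_def)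

end

context PP begin

definition MK where "MK \<beta> h K = Sup (H \<beta> h ` K)"

lemma MK_attain:
  assumes "compact K" "K \<noteq> {}" "K \<subseteq> {-1..1}"
  shows "\<exists>x\<in>K. H \<beta> h x = MK \<beta> h K \<and> (\<forall>y\<in>K. H \<beta> h y \<le> MK \<beta> h K)"
proof -
  obtain x where x: "x \<in> K" "\<forall>y\<in>K. H \<beta> h y \<le> H \<beta> h x"
    using continuous_attains_sup[OF assms(1,2) continuous_on_subset[OF Hfun_cont assms(3)]] by blast
  have "MK \<beta> h K = H \<beta> h x" unfolding MK_def
    by (rule cSup_eq_maximum) (use x in auto)
  then show ?thesis using x by auto
qed

lemma MK_upper: "compact K \<Longrightarrow> K \<subseteq> {-1..1} \<Longrightarrow> x \<in> K \<Longrightarrow> H \<beta> h x \<le> MK \<beta> h K"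
  using MK_attain[of K \<beta> h] by blast

lemma H_diff_bound: "x \<in> {-1..1} \<Longrightarrow> H \<beta> h x \<le> H \<beta>' h' x + \<bar>\<beta> - \<beta>'\<bar> + \<bar>h - h'\<bar>"
proof -
  assume x: "x \<in> {-1..1}"
  then have ax: "\<bar>x\<bar> \<le> 1" by auto
  then have axp: "\<bar>x^p\<bar> \<le> 1" by (simp add: power_abs power_le_one)
  have "H \<beta> h x - H \<beta>' h' x = (\<beta> - \<beta>') * x^p + (h - h') * x"
    by (simp add: Hfun_def algebra_simps)
  also have "\<dots> \<le> \<bar>\<beta> - \<beta>'\<bar> * \<bar>x^p\<bar> + \<bar>h - h'\<bar> * \<bar>x\<bar>"
    by (intro add_mono) (auto simp: abs_mult[symmetric])
  also have "\<dots> \<le> \<bar>\<beta> - \<beta>'\<bar> * 1 + \<bar>h - h'\<bar> * 1"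
    by (intro add_mono mult_left_mono axp ax) auto
  finally show ?thesis by simp
qed

lemma MK_lip:
  assumes "compact K" "K \<noteq> {}" "K \<subseteq> {-1..1}"
  shows "MK \<beta> h K \<le> MK \<beta>' h' K + \<bar>\<beta> - \<beta>'\<bar> + \<bar>h - h'\<bar>"
proof -
  obtain x where x: "x \<in> K" "H \<beta> h x = MK \<beta> h K" using MK_attain[OF assms] by blast
  have "MK \<beta> h K \<le> H \<beta>' h' x + \<bar>\<beta> - \<beta>'\<bar> + \<bar>h - h'\<bar>"
    using H_diff_bound[of x \<beta> h \<beta>' h'] x assms(3) by auto
  also have "\<dots> \<le> MK \<beta>' h' K + \<bar>\<beta> - \<beta>'\<bar> + \<bar>h - h'\<bar>"
    using MK_upper[OF assms(1,3) x(1)] by simp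
  finally show ?thesis .
qed

lemma MK_lip_abs:
  assumes "compact K" "K \<noteq> {}" "K \<subseteq> {-1..1}"
  shows "\<bar>MK \<beta> h K - MK \<beta>' h' K\<bar> \<le> \<bar>\<beta> - \<beta>'\<bar> + \<bar>h - h'\<bar>"
  using MK_lip[OF assms, of \<beta> h \<beta>' h'] MK_lip[OF assms, of \<beta>' h' \<beta> h] by (simp add: abs_minus_commute)

definition Gf where "Gf \<beta> h = MK \<beta> h {-1..1}"

lemma GM_iff: "x \<in> GM \<beta> h \<longleftrightarrow> x \<in> {-1..1} \<and> H \<beta> h x = Gf \<beta> h"
proof
  assume a: "x \<in> GM \<beta> h"
  then have x: "x \<in> {-1..1}" "\<forall>y\<in>{-1..1}. H \<beta> h y \<le> H \<beta> h x"
    by (auto simp: global_maximizers_def)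
  have "Gf \<beta> h = H \<beta> h x" unfolding Gf_def MK_def
    by (rule cSup_eq_maximum) (use x in auto)
  then show "x \<in> {-1..1} \<and> H \<beta> h x = Gf \<beta> h" using x by auto
next
  assume "x \<in> {-1..1} \<and> H \<beta> h x = Gf \<beta> h"
  then show "x \<in> GM \<beta> h" unfolding global_maximizers_def Gf_def
    using MK_upper[of "{-1..1}"] by auto
qed

lemma GM_nonempty: "\<exists>x. x \<in> GM \<beta> h"
  using MK_attain[of "{-1..1}" \<beta> h] by (auto simp: GM_iff Gf_def)

lemma Gf_upper: "x \<in> {-1..1} \<Longrightarrow> H \<beta> h x \<le> Gf \<beta> h"
  unfolding Gf_def by (rule MK_upper) auto

lemma H_right_end: "\<exists>y. -1 < y \<and> y < 1 \<and> H \<beta> h 1 < H \<beta> h y"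
proof -
  define C where "C = real p * \<bar>\<beta>\<bar> + \<bar>h\<bar>"
  define e where "e = exp (-(2*C+2))"
  have C0: "C \<ge> 0" by (simp add: C_def)
  have e0: "0 < e" by (simp add: e_def)
  have e1: "e < 1" using C0 by (simp add: e_def)
  define y1 where "y1 = 1 - e/2"
  have y1: "-1 < y1" "y1 < 1" using e0 e1 by (auto simp: y1_def)
  have "H \<beta> h 1 < H \<beta> h y1"
  proof (rule H_strict_dec)
    show "-1 \<le> y1" "y1 < 1" "1 \<le> (1::real)" using y1 by auto
    fix z assume z: "y1 < z" "z < 1"
    have z0: "0 < z" using z e1 by (auto simp: y1_def)
    have "1 - z < e" using z e0 by (auto simp: y1_def)
    then have "ln (1 - z) < ln e" using z by (intro ln_less_cancel_iff[THEN iffD2]) auto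
    then have l1: "ln (1 - z) < -(2*C+2)" by (simp add: e_def)
    have l2: "ln (1 + z) \<ge> 0" using z0 by simp
    have "artanh z = (ln (1 + z) - ln (1 - z)) / 2" using z z0 by (simp add: artanh_def ln_div)
    then have at: "artanh z > C + 1" using l1 l2 by simp
    have "\<bar>z ^ (p - 1)\<bar> \<le> 1" using z z0 by (simp add: power_abs power_le_one)
    then have "\<bar>real p * \<beta> * z ^ (p - 1)\<bar> \<le> real p * \<bar>\<beta>\<bar>"
      by (simp add: abs_mult mult_left_le)
    then have "real p * \<beta> * z ^ (p - 1) + h \<le> C" unfolding C_def by linarith
    then show "Hp \<beta> h z < 0" using at by (simp add: Hp_def)
  qed
  then show ?thesis using y1 by blast
qed

lemma H_minus: "H \<beta> h (-x) = Hfun ((-1)^p * \<beta>) (-h) p x"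
  by (simp add: Hfun_def Ient_minus power_minus[of x p])

lemma H_left_end: "\<exists>y. -1 < y \<and> y < 1 \<and> H \<beta> h (-1) < H \<beta> h y"
proof -
  obtain y where y: "-1 < y" "y < 1" "Hfun ((-1)^p * \<beta>) (-h) p 1 < Hfun ((-1)^p * \<beta>) (-h) p y"
    using PP.H_right_end[OF PP_axioms] by blast
  then have "H \<beta> h (-1) < H \<beta> h (-y)" by (simp add: H_minus[symmetric])
  then show ?thesis using y by (intro exI[of _ "-y"]) auto
qed

lemma GM_interior: "x \<in> GM \<beta> h \<Longrightarrow> -1 < x \<and> x < 1"
proof -
  assume x: "x \<in> GM \<beta> h"
  then have x1: "x \<in> {-1..1}" "H \<beta> h x = Gf \<beta> h" by (auto simp: GM_iff)
  have "x \<noteq> 1"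
  proof
    assume "x = 1"
    then obtain y where "-1 < y" "y < 1" "H \<beta> h x < H \<beta> h y" using H_right_end by blast
    then show False using Gf_upper[of y \<beta> h] x1 by auto
  qed
  moreover have "x \<noteq> -1"
  proof
    assume "x = -1"
    then obtain y where "-1 < y" "y < 1" "H \<beta> h x < H \<beta> h y" using H_left_end by blast
    then show False using Gf_upper[of y \<beta> h] x1 by auto
  qed
  ultimately show ?thesis using x1 by auto
qed

lemma GM_crit: "x \<in> GM \<beta> h \<Longrightarrow> Hp \<beta> h x = 0"
proof -
  assume x: "x \<in> GM \<beta> h"
  then have xi: "-1 < x" "x < 1" using GM_interior by auto
  have xm: "H \<beta> h x = Gf \<beta> h" using x by (auto simp: GM_iff)
  show ?thesis
  proof (rule DERIV_local_max[OF H_deriv])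
    show "\<bar>x\<bar> < 1" using xi by auto
    show "0 < min (1 - x) (x + 1)" using xi by auto
    show "\<forall>y. \<bar>x - y\<bar> < min (1 - x) (x + 1) \<longrightarrow> H \<beta> h y \<le> H \<beta> h x"
      using Gf_upper xm by (auto simp: abs_less_iff)
  qed
qed

lemma GM_second: "x \<in> GM \<beta> h \<Longrightarrow> Hpp \<beta> x \<le> 0"
proof (rule ccontr)
  assume x: "x \<in> GM \<beta> h" and pos: "\<not> Hpp \<beta> x \<le> 0"
  then have xi: "-1 < x" "x < 1" using GM_interior by auto
  have xm: "H \<beta> h x = Gf \<beta> h" using x by (auto simp: GM_iff)
  have c: "Hp \<beta> h x = 0" using GM_crit[OF x] .
  obtain d where d: "d > 0" "\<forall>t>0. t < d \<longrightarrow> Hp \<beta> h x < Hp \<beta> h (x + t)"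
  proof -
    have ax: "\<bar>x\<bar> < 1" using xi by auto
    show ?thesis using DERIV_pos_inc_right[OF Hp_deriv[OF ax, of \<beta> h]] pos that by auto
  qed
  define e where "e = min d (1 - x) / 2"
  have e: "0 < e" "e < d" "x + e < 1" using d(1) xi unfolding e_def by (auto simp: min_def field_simps)
  have "H \<beta> h x < H \<beta> h (x + e)"
  proof (rule H_strict_inc)
    show "-1 \<le> x" "x < x + e" "x + e \<le> 1" using xi e by auto
    fix z assume z: "x < z" "z < x + e"
    then show "Hp \<beta> h z > 0" using d(2)[rule_format, of "z - x"] e c by auto
  qed
  then show False using Gf_upper[of "x + e" \<beta> h] xi e xm by auto
qed

lemma GM_kf: "x \<in> GM \<beta> h \<Longrightarrow> 0 < x \<Longrightarrow> real p * (real p - 1) * \<beta> * kf x \<le> 1"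
  using GM_second[of x \<beta> h] Hpp_pos_iff[of x \<beta>] GM_interior[of x \<beta> h] by auto

end

context PP begin

lemma lo_ge: "-1 \<le> lo" and lo_le0: "lo \<le> 0" and lo_ms: "lo < ms"
  using ms_pos by (auto simp: lo_def)

lemma lo_odd: "lo < z \<Longrightarrow> z \<le> 0 \<Longrightarrow> odd p \<and> lo = -1"
  by (auto simp: lo_def split: if_splits)

lemma odd_pow_nonpos: "odd p \<Longrightarrow> z \<le> 0 \<Longrightarrow> z^(p-2) \<le> (0::real)"
proof -
  assume o: "odd p" and z: "z \<le> 0"
  have o2: "odd (p-2)" using o p3 by auto
  have "z^(p-2) \<le> 0^(p-2)" using power_mono_odd[OF o2 z] .
  then show ?thesis using p3 by (simp add: power_0_left)
qed

lemma Hpp_neg_nonpos: "odd p \<Longrightarrow> 0 \<le> \<beta> \<Longrightarrow> -1 < z \<Longrightarrow> z \<le> 0 \<Longrightarrow> Hpp \<beta> z < 0"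
proof -
  assume o: "odd p" and b: "0 \<le> \<beta>" and z: "-1 < z" "z \<le> 0"
  have "z^2 < 1" using z by (simp add: abs_square_less_1)
  then have d: "1/(1 - z^2) > 0" by simp
  have "real p * (real p - 1) * \<beta> \<ge> 0" using b p3 by simp
  then have "real p * (real p - 1) * \<beta> * z^(p-2) \<le> 0"
    using odd_pow_nonpos[OF o z(2)] by (simp add: mult_nonneg_nonpos)
  then show ?thesis using d unfolding Hpp_def by linarith
qed

lemma Hpp_neg_left:
  assumes b: "0 \<le> \<beta>" and z: "lo < z" "z < y" "y \<le> ms"
    and c: "y \<le> 0 \<or> real p * (real p - 1) * \<beta> * kf y \<le> 1"
  shows "Hpp \<beta> z < 0"
proof (cases "z \<le> 0")
  case True
  then show ?thesis using lo_odd[OF z(1) True] Hpp_neg_nonpos b z by auto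
next
  case False
  then have z0: "0 < z" by simp
  have zy: "kf z < kf y" using kf_inc[of z y] z z0 by auto
  have az: "\<bar>z\<bar> < 1" using z z0 ms_lt1 by auto
  have "real p * (real p - 1) * \<beta> * kf z < 1"
  proof (cases "\<beta> = 0")
    case True then show ?thesis by simp
  next
    case False
    then have "real p * (real p - 1) * \<beta> > 0" using b p3 by simp
    then have "real p * (real p - 1) * \<beta> * kf z < real p * (real p - 1) * \<beta> * kf y"
      using zy by (rule mult_strict_left_mono[rotated])
    then show ?thesis using c z z0 by auto
  qed
  then show ?thesis using Hpp_neg_iff[OF az] by simp
qed

lemma Hpp_neg_right:
  assumes b: "0 \<le> \<beta>" and z: "ms \<le> y" "y < z" "z < 1"
    and c: "real p * (real p - 1) * \<beta> * kf y \<le> 1"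
  shows "Hpp \<beta> z < 0"
proof -
  have zy: "kf z < kf y" using kf_dec[of y z] z by auto
  have az: "\<bar>z\<bar> < 1" using z ms_pos by auto
  have "real p * (real p - 1) * \<beta> * kf z < 1"
  proof (cases "\<beta> = 0")
    case True then show ?thesis by simp
  next
    case False
    then have "real p * (real p - 1) * \<beta> > 0" using b p3 by simp
    then have "real p * (real p - 1) * \<beta> * kf z < real p * (real p - 1) * \<beta> * kf y"
      using zy by (rule mult_strict_left_mono[rotated])
    then show ?thesis using c by auto
  qed
  then show ?thesis using Hpp_neg_iff[OF az] by simp
qed

lemma kf_ms_pos: "kf ms > 0"
proof -
  have "ms^2 < 1" using ms_pos ms_lt1 by (simp add: abs_square_less_1)
  then show ?thesis using ms_pos by (simp add: kf_def)
qed

lemma kf_lt_ms: "0 < z \<Longrightarrow> z \<noteq> ms \<Longrightarrow> kf z < kf ms"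
  using kf_inc[of z ms] kf_dec[of ms z] by (cases "z < ms") auto

lemma Hpp_neg_bc:
  assumes b: "0 \<le> \<beta>" "\<beta> \<le> bc" and z: "lo < z" "z < 1" "z \<noteq> ms"
  shows "Hpp \<beta> z < 0"
proof (cases "z \<le> 0")
  case True
  then show ?thesis using lo_odd[OF z(1) True] Hpp_neg_nonpos b z by auto
next
  case False
  then have z0: "0 < z" by simp
  have az: "\<bar>z\<bar> < 1" using z z0 by auto
  have kz: "kf z < kf ms" using kf_lt_ms z0 z by auto
  have "real p * (real p - 1) * \<beta> * kf z < 1"
  proof (cases "\<beta> = 0")
    case True then show ?thesis by simp
  next
    case False
    have qq: "real p * (real p - 1) > 0" using p3 by simp
    have "\<beta> * kf z < \<beta> * kf ms" using kz False b by simp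
    also have "\<dots> \<le> bc * kf ms" using b kf_ms_pos by (intro mult_right_mono) auto
    finally have "real p * (real p - 1) * (\<beta> * kf z) < real p * (real p - 1) * (bc * kf ms)"
      using qq by (rule mult_strict_left_mono)
    then show ?thesis using bc_kf by (simp add: mult.assoc)
  qed
  then show ?thesis using Hpp_neg_iff[OF az] by simp
qed

lemma Hpp_pos_ms: "bc < \<beta> \<Longrightarrow> Hpp \<beta> ms > 0"
proof -
  assume b: "bc < \<beta>"
  have qq: "real p * (real p - 1) > 0" using p3 by simp
  have "bc * kf ms < \<beta> * kf ms" using b kf_ms_pos by simp
  then have "real p * (real p - 1) * (bc * kf ms) < real p * (real p - 1) * (\<beta> * kf ms)"
    using qq by (rule mult_strict_left_mono)
  then have "real p * (real p - 1) * \<beta> * kf ms > 1" using bc_kf by (simp add: mult.assoc)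
  then show ?thesis using Hpp_pos_iff[of ms \<beta>] ms_pos ms_lt1 by simp
qed

lemma TwoL:
  assumes b: "0 \<le> \<beta>" and xy: "x < y" "x \<in> GM \<beta> h" "y \<in> GM \<beta> h" "lo \<le> x" "y \<le> ms"
  shows False
proof -
  have c: "y \<le> 0 \<or> real p * (real p - 1) * \<beta> * kf y \<le> 1"
    using GM_kf[OF xy(3)] by (cases "y \<le> 0") auto
  have "Hp \<beta> h y < Hp \<beta> h x"
  proof (rule Hp_strict_dec)
    show "-1 < x" "x < y" "y < 1" using GM_interior[OF xy(2)] GM_interior[OF xy(3)] xy by auto
    fix z assume "x < z" "z < y"
    then show "Hpp \<beta> z < 0" using Hpp_neg_left[OF b _ _ xy(5) c] xy(4) by auto
  qed
  then show False using GM_crit[OF xy(2)] GM_crit[OF xy(3)] by simp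
qed

lemma TwoR:
  assumes b: "0 \<le> \<beta>" and xy: "x < y" "x \<in> GM \<beta> h" "y \<in> GM \<beta> h" "ms \<le> x"
  shows False
proof -
  have c: "real p * (real p - 1) * \<beta> * kf x \<le> 1"
    using GM_kf[OF xy(2)] xy(4) ms_pos by auto
  have y1: "y < 1" using GM_interior[OF xy(3)] by auto
  have "Hp \<beta> h y < Hp \<beta> h x"
  proof (rule Hp_strict_dec)
    show "-1 < x" "x < y" "y < 1" using GM_interior[OF xy(2)] GM_interior[OF xy(3)] xy by auto
    fix z assume "x < z" "z < y"
    then show "Hpp \<beta> z < 0" using Hpp_neg_right[OF b xy(4) _ _ c] y1 by auto
  qed
  then show False using GM_crit[OF xy(2)] GM_crit[OF xy(3)] by simp
qed

lemma TwoC: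
  assumes b: "0 \<le> \<beta>" "\<beta> \<le> bc" and xy: "x < y" "x \<in> GM \<beta> h" "y \<in> GM \<beta> h" "lo \<le> x"
  shows False
proof -
  have x1: "-1 < x" and y1: "y < 1" using GM_interior[OF xy(2)] GM_interior[OF xy(3)] by auto
  have dec: "Hp \<beta> h v < Hp \<beta> h u" if "x \<le> u" "u < v" "v \<le> y" "ms \<notin> {u<..<v}" for u v
  proof (rule Hp_strict_dec)
    show "-1 < u" "u < v" "v < 1" using that x1 y1 by auto
    fix z assume "u < z" "z < v"
    then show "Hpp \<beta> z < 0" using Hpp_neg_bc[OF b] that xy(4) y1 by auto
  qed
  have "Hp \<beta> h y < Hp \<beta> h x"
  proof (cases "x < ms \<and> ms < y")
    case True
    then have "Hp \<beta> h ms < Hp \<beta> h x" "Hp \<beta> h y < Hp \<beta> h ms"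
      using dec[of x ms] dec[of ms y] by auto
    then show ?thesis by simp
  next
    case False
    then show ?thesis using dec[of x y] xy by auto
  qed
  then show False using GM_crit[OF xy(2)] GM_crit[OF xy(3)] by simp
qed

lemma NotMs: "bc < \<beta> \<Longrightarrow> ms \<notin> GM \<beta> h"
  using GM_second Hpp_pos_ms by fastforce

lemma Sep:
  assumes b: "bc < \<beta>" and xy: "x < y" "x \<in> GM \<beta> h" "y \<in> GM \<beta> h" "lo \<le> x"
  shows "x < ms \<and> ms < y"
proof -
  have b0: "0 \<le> \<beta>" using b bc_pos by simp
  have "\<not> y \<le> ms" using TwoL[OF b0 xy] by blast
  moreover have "\<not> ms \<le> x" using TwoR[OF b0 xy(1-3)] by blast
  ultimately show ?thesis by simp
qed

lemma AtMost2:
  assumes b: "bc < \<beta>" and xy: "x < y" "y < z" "x \<in> GM \<beta> h" "y \<in> GM \<beta> h" "z \<in> GM \<beta> h" "lo \<le> x"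
  shows False
  using Sep[OF b xy(1,3,4,6)] Sep[OF b xy(2,4,5)] xy by auto

definition Lf where "Lf \<beta> h = MK \<beta> h {lo..ms}"
definition Rf where "Rf \<beta> h = MK \<beta> h {ms..1}"
definition Df where "Df \<beta> h = Rf \<beta> h - Lf \<beta> h"

lemma L_sub: "{lo..ms} \<subseteq> {-1..1}" using lo_ge ms_lt1 by auto
lemma R_sub: "{ms..1} \<subseteq> {-1..1}" using ms_pos by auto
lemma L_ne: "{lo..ms} \<noteq> {}" using lo_ms by auto
lemma R_ne: "{ms..1} \<noteq> {}" using ms_lt1 by auto

lemma L_attain: "\<exists>x. lo \<le> x \<and> x \<le> ms \<and> H \<beta> h x = Lf \<beta> h"
  using MK_attain[OF compact_Icc L_ne L_sub, of \<beta> h] by (auto simp: Lf_def)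
lemma R_attain: "\<exists>x. ms \<le> x \<and> x \<le> 1 \<and> H \<beta> h x = Rf \<beta> h"
  using MK_attain[OF compact_Icc R_ne R_sub, of \<beta> h] by (auto simp: Rf_def)
lemma L_upper: "lo \<le> x \<Longrightarrow> x \<le> ms \<Longrightarrow> H \<beta> h x \<le> Lf \<beta> h"
  using MK_upper[OF compact_Icc L_sub] by (auto simp: Lf_def)
lemma R_upper: "ms \<le> x \<Longrightarrow> x \<le> 1 \<Longrightarrow> H \<beta> h x \<le> Rf \<beta> h"
  using MK_upper[OF compact_Icc R_sub] by (auto simp: Rf_def)

lemma L_le_G: "Lf \<beta> h \<le> Gf \<beta> h"
proof -
  obtain x where "lo \<le> x" "x \<le> ms" "H \<beta> h x = Lf \<beta> h" using L_attain by blast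
  then show ?thesis using Gf_upper[of x \<beta> h] lo_ge ms_lt1 by auto
qed
lemma R_le_G: "Rf \<beta> h \<le> Gf \<beta> h"
proof -
  obtain x where "ms \<le> x" "x \<le> 1" "H \<beta> h x = Rf \<beta> h" using R_attain by blast
  then show ?thesis using Gf_upper[of x \<beta> h] ms_pos by auto
qed

lemma Gf_split: "GM \<beta> h \<subseteq> {lo..1} \<Longrightarrow> Gf \<beta> h = max (Lf \<beta> h) (Rf \<beta> h)"
proof -
  assume S: "GM \<beta> h \<subseteq> {lo..1}"
  obtain g where g: "g \<in> GM \<beta> h" using GM_nonempty by blast
  then have gv: "H \<beta> h g = Gf \<beta> h" "lo \<le> g" "g \<le> 1" using S by (auto simp: GM_iff)
  have "Gf \<beta> h \<le> max (Lf \<beta> h) (Rf \<beta> h)"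
    using L_upper[of g \<beta> h] R_upper[of g \<beta> h] gv by (cases "g \<le> ms") auto
  then show ?thesis using L_le_G[of \<beta> h] R_le_G[of \<beta> h] unfolding max_def by (auto split: if_splits)
qed

lemma CardD:
  assumes b: "bc < \<beta>" and S: "GM \<beta> h \<subseteq> {lo..1}"
  shows "card (GM \<beta> h) = 2 \<longleftrightarrow> Df \<beta> h = 0"
proof
  assume c: "card (GM \<beta> h) = 2"
  then obtain a c where ac: "GM \<beta> h = {a, c}" "a \<noteq> c" by (auto simp: card_2_iff)
  define x where "x = min a c"
  define y where "y = max a c"
  have xy: "x < y" "x \<in> GM \<beta> h" "y \<in> GM \<beta> h" using ac by (auto simp: x_def y_def min_def max_def)
  have x_lo: "lo \<le> x" using S xy by auto
  have sep: "x < ms" "ms < y" using Sep[OF b xy x_lo] by auto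
  have Gx: "H \<beta> h x = Gf \<beta> h" "H \<beta> h y = Gf \<beta> h" using xy by (auto simp: GM_iff)
  have "Gf \<beta> h \<le> Lf \<beta> h" using L_upper[of x \<beta> h] x_lo sep Gx by auto
  moreover have "Gf \<beta> h \<le> Rf \<beta> h" using R_upper[of y \<beta> h] sep Gx xy GM_interior[of y] by fastforce
  ultimately show "Df \<beta> h = 0" using L_le_G[of \<beta> h] R_le_G[of \<beta> h] by (simp add: Df_def)
next
  assume D: "Df \<beta> h = 0"
  have G: "Gf \<beta> h = Lf \<beta> h" "Gf \<beta> h = Rf \<beta> h" using Gf_split[OF S] D by (auto simp: Df_def)
  obtain xL where xL: "lo \<le> xL" "xL \<le> ms" "H \<beta> h xL = Lf \<beta> h" using L_attain by blast
  obtain xR where xR: "ms \<le> xR" "xR \<le> 1" "H \<beta> h xR = Rf \<beta> h" using R_attain by blast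
  have gL: "xL \<in> GM \<beta> h" using xL G lo_ge ms_lt1 by (auto simp: GM_iff)
  have gR: "xR \<in> GM \<beta> h" using xR G ms_pos by (auto simp: GM_iff)
  have nL: "xL \<noteq> ms" and nR: "xR \<noteq> ms" using NotMs[OF b] gL gR by auto
  have sub: "z = xL \<or> z = xR" if zz: "z \<in> GM \<beta> h" for z
  proof (rule disjCI)
    assume zr: "z \<noteq> xR"
    have z: "z \<in> GM \<beta> h" "z \<noteq> xR" using zz zr by auto
    have zlo: "lo \<le> z" using S z by auto
    show "z = xL"
    proof (rule ccontr)
      assume "z \<noteq> xL"
      show False
      proof (cases "z \<le> ms")
        case True
        then show False using TwoL[of \<beta> z xL h] TwoL[of \<beta> xL z h] b bc_pos zlo xL z gL \<open>z \<noteq> xL\<close>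
          by (cases "z < xL") auto
      next
        case False
        then show False using TwoR[of \<beta> z xR h] TwoR[of \<beta> xR z h] b bc_pos xR z gR
          by (cases "z < xR") auto
      qed
    qed
  qed
  have "GM \<beta> h = {xL, xR}" using sub gL gR by auto
  moreover have "xL \<noteq> xR" using xL xR nL by auto
  ultimately show "card (GM \<beta> h) = 2" by simp
qed

lemma D0_attain:
  assumes b: "bc < \<beta>" and S: "GM \<beta> h \<subseteq> {lo..1}" and D: "Df \<beta> h = 0"
  shows "lo \<le> x \<Longrightarrow> x \<le> ms \<Longrightarrow> H \<beta> h x = Lf \<beta> h \<Longrightarrow> x \<in> GM \<beta> h \<and> x < ms"
    and "ms \<le> x \<Longrightarrow> x \<le> 1 \<Longrightarrow> H \<beta> h x = Rf \<beta> h \<Longrightarrow> x \<in> GM \<beta> h \<and> ms < x"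
proof -
  have G: "Gf \<beta> h = Lf \<beta> h" "Gf \<beta> h = Rf \<beta> h" using Gf_split[OF S] D by (auto simp: Df_def)
  show "lo \<le> x \<Longrightarrow> x \<le> ms \<Longrightarrow> H \<beta> h x = Lf \<beta> h \<Longrightarrow> x \<in> GM \<beta> h \<and> x < ms"
  proof -
    assume a: "lo \<le> x" "x \<le> ms" "H \<beta> h x = Lf \<beta> h"
    then have "x \<in> GM \<beta> h" using G lo_ge ms_lt1 by (auto simp: GM_iff)
    then show ?thesis using NotMs[OF b] a by (cases "x = ms") auto
  qed
  show "ms \<le> x \<Longrightarrow> x \<le> 1 \<Longrightarrow> H \<beta> h x = Rf \<beta> h \<Longrightarrow> x \<in> GM \<beta> h \<and> ms < x"
  proof -
    assume a: "ms \<le> x" "x \<le> 1" "H \<beta> h x = Rf \<beta> h"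
    then have "x \<in> GM \<beta> h" using G ms_pos by (auto simp: GM_iff)
    then show ?thesis using NotMs[OF b] a by (cases "x = ms") auto
  qed
qed

lemma H_shift_h: "H \<beta> h' x = H \<beta> h x + (h' - h) * x"
  by (simp add: Hfun_def algebra_simps)
lemma H_shift_b: "H \<beta>' h x = H \<beta> h x + (\<beta>' - \<beta>) * x^p"
  by (simp add: Hfun_def algebra_simps)

lemma Dmono_h:
  assumes xR: "ms \<le> xR" "xR \<le> 1" "H \<beta> h xR = Rf \<beta> h"
    and xL: "lo \<le> xL" "xL \<le> ms" "H \<beta> h' xL = Lf \<beta> h'"
  shows "Df \<beta> h' - Df \<beta> h \<ge> (h' - h) * (xR - xL)"
proof -
  have "Rf \<beta> h' \<ge> H \<beta> h' xR" using R_upper xR by auto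
  then have r: "Rf \<beta> h' \<ge> Rf \<beta> h + (h' - h) * xR" using H_shift_h[of \<beta> h' xR h] xR by simp
  have "Lf \<beta> h \<ge> H \<beta> h xL" using L_upper xL by auto
  then have l: "Lf \<beta> h \<ge> Lf \<beta> h' - (h' - h) * xL" using H_shift_h[of \<beta> h' xL h] xL by simp
  show ?thesis using r l by (simp add: Df_def algebra_simps)
qed

lemma Dmono_b:
  assumes xR: "ms \<le> xR" "xR \<le> 1" "H \<beta> h xR = Rf \<beta> h"
    and xL: "lo \<le> xL" "xL \<le> ms" "H \<beta>' h xL = Lf \<beta>' h"
  shows "Df \<beta>' h - Df \<beta> h \<ge> (\<beta>' - \<beta>) * (xR^p - xL^p)"
proof -
  have "Rf \<beta>' h \<ge> H \<beta>' h xR" using R_upper xR by auto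
  then have r: "Rf \<beta>' h \<ge> Rf \<beta> h + (\<beta>' - \<beta>) * xR^p" using H_shift_b[of \<beta>' h xR \<beta>] xR by simp
  have "Lf \<beta> h \<ge> H \<beta> h xL" using L_upper xL by auto
  then have l: "Lf \<beta> h \<ge> Lf \<beta>' h - (\<beta>' - \<beta>) * xL^p" using H_shift_b[of \<beta>' h xL \<beta>] xL by simp
  show ?thesis using r l by (simp add: Df_def algebra_simps)
qed

lemma D_nondec: "h \<le> h' \<Longrightarrow> Df \<beta> h \<le> Df \<beta> h'"
proof -
  assume hh: "h \<le> h'"
  obtain xR where xR: "ms \<le> xR" "xR \<le> 1" "H \<beta> h xR = Rf \<beta> h" using R_attain by blast
  obtain xL where xL: "lo \<le> xL" "xL \<le> ms" "H \<beta> h' xL = Lf \<beta> h'" using L_attain by blast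
  have "(h' - h) * (xR - xL) \<ge> 0" using hh xR xL by simp
  then show ?thesis using Dmono_h[OF xR xL] by simp
qed

lemma D_lip: "\<bar>Df \<beta> h - Df \<beta>' h'\<bar> \<le> 2 * (\<bar>\<beta> - \<beta>'\<bar> + \<bar>h - h'\<bar>)"
proof -
  have "\<bar>Lf \<beta> h - Lf \<beta>' h'\<bar> \<le> \<bar>\<beta> - \<beta>'\<bar> + \<bar>h - h'\<bar>"
    unfolding Lf_def by (rule MK_lip_abs[OF compact_Icc L_ne L_sub])
  moreover have "\<bar>Rf \<beta> h - Rf \<beta>' h'\<bar> \<le> \<bar>\<beta> - \<beta>'\<bar> + \<bar>h - h'\<bar>"
    unfolding Rf_def by (rule MK_lip_abs[OF compact_Icc R_ne R_sub])
  ultimately show ?thesis by (simp add: Df_def abs_le_iff)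
qed

lemma Dz:
  assumes b: "bc < \<beta>" and S: "GM \<beta> h0 \<subseteq> {lo..1}" and D: "Df \<beta> h0 = 0"
  shows "h0 < h \<Longrightarrow> Df \<beta> h > 0" and "h < h0 \<Longrightarrow> Df \<beta> h < 0"
proof -
  assume hh: "h0 < h"
  obtain xR where xR: "ms \<le> xR" "xR \<le> 1" "H \<beta> h0 xR = Rf \<beta> h0" using R_attain by blast
  obtain xL where xL: "lo \<le> xL" "xL \<le> ms" "H \<beta> h xL = Lf \<beta> h" using L_attain by blast
  have "ms < xR" using D0_attain(2)[OF b S D xR] by auto
  then have "(h - h0) * (xR - xL) > 0" using hh xL by simp
  then show "Df \<beta> h > 0" using Dmono_h[OF xR xL] D by simp
next
  assume hh: "h < h0"
  obtain xR where xR: "ms \<le> xR" "xR \<le> 1" "H \<beta> h xR = Rf \<beta> h" using R_attain by blast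
  obtain xL where xL: "lo \<le> xL" "xL \<le> ms" "H \<beta> h0 xL = Lf \<beta> h0" using L_attain by blast
  have "xL < ms" using D0_attain(1)[OF b S D xL] by auto
  then have "(h0 - h) * (xR - xL) > 0" using hh xR by simp
  then show "Df \<beta> h < 0" using Dmono_h[OF xR xL] D by simp
qed

end

lemma artanh_ge: "0 \<le> t \<Longrightarrow> t < 1 \<Longrightarrow> artanh t \<ge> (t::real)"
proof -
  assume t: "0 \<le> t" "t < 1"
  have "(\<lambda>s. artanh s - s) 0 \<le> (\<lambda>s. artanh s - s) t"
  proof (rule DERIV_nonneg_imp_increasing_open[OF t(1)])
    fix s :: real assume s: "0 < s" "s < t"
    have "\<bar>s\<bar> < 1" using s t by auto
    then have "((\<lambda>s. artanh s - s) has_real_derivative (1 / (1 - s^2) - 1)) (at s)"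
      by (auto intro!: derivative_eq_intros)
    moreover have "1 / (1 - s^2) - 1 \<ge> 0"
    proof -
      have "s^2 < 1" "0 \<le> s^2" using \<open>\<bar>s\<bar> < 1\<close> by (auto simp: abs_square_less_1)
      then have "1 \<le> 1 / (1 - s^2)" by (simp add: field_simps)
      then show ?thesis by simp
    qed
    ultimately show "\<exists>y. ((\<lambda>s. artanh s - s) has_real_derivative y) (at s) \<and> 0 \<le> y" by blast
  next
    show "continuous_on {0..t} (\<lambda>s. artanh s - s)"
      using t by (intro continuous_intros) auto
  qed
  then show ?thesis by simp
qed

lemma Ient_quad_pos: "0 \<le> x \<Longrightarrow> x < 1 \<Longrightarrow> Ient x \<ge> x^2/2"
proof -
  assume t: "0 \<le> x" "x < 1"
  have "(\<lambda>s. Ient s - s^2/2) 0 \<le> (\<lambda>s. Ient s - s^2/2) x"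
  proof (rule DERIV_nonneg_imp_increasing_open[OF t(1)])
    fix s :: real assume s: "0 < s" "s < x"
    have "\<bar>s\<bar> < 1" using s t by auto
    then have "((\<lambda>s. Ient s - s^2/2) has_real_derivative (artanh s - s)) (at s)"
      by (auto intro!: derivative_eq_intros Ient_deriv)
    moreover have "artanh s - s \<ge> 0" using artanh_ge[of s] s t by auto
    ultimately show "\<exists>y. ((\<lambda>s. Ient s - s^2/2) has_real_derivative y) (at s) \<and> 0 \<le> y" by blast
  next
    have "continuous_on {0..x} Ient" using Ient_cont continuous_on_subset t by fastforce
    then show "continuous_on {0..x} (\<lambda>s. Ient s - s^2/2)"
      by (intro continuous_intros) auto
  qed
  moreover have "Ient 0 = 0" by (simp add: Ient_def)
  ultimately show ?thesis by simp
qed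

lemma Ient_quad: "\<bar>x\<bar> < 1 \<Longrightarrow> Ient x \<ge> x^2/2"
  using Ient_quad_pos[of x] Ient_quad_pos[of "-x"] Ient_minus[of x] by (cases "x \<ge> 0") auto

lemma Ient_0: "Ient 0 = 0" by (simp add: Ient_def)

context PP begin

definition TT where "TT = {\<beta>. \<beta> \<ge> 0 \<and> Sup (Hfun \<beta> 0 p ` {-1..1}) = 0}"

lemma TT_iff: "\<beta> \<in> TT \<longleftrightarrow> 0 \<le> \<beta> \<and> Gf \<beta> 0 = 0"
  by (simp add: TT_def Gf_def MK_def)

lemma bt_def': "bt = Sup TT" by (simp add: beta_tilde_def TT_def)

lemma H0: "H \<beta> h 0 = 0" using p3 by (simp add: Hfun_def Ient_0 power_0_left)

lemma Gf_nonneg: "Gf \<beta> h \<ge> 0" using Gf_upper[of 0 \<beta> h] H0 by simp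

lemma TT_0: "0 \<in> TT"
proof -
  obtain x where x: "x \<in> {-1..1}" "H 0 0 x = Gf 0 0"
    using MK_attain[of "{-1..1}" 0 0] by (auto simp: Gf_def)
  then have "Gf 0 0 \<le> 0" using Ient_nonneg[of x] by (simp add: Hfun_def)
  then show ?thesis using Gf_nonneg[of 0 0] by (simp add: TT_iff)
qed

lemma TT_down: "\<beta> \<in> TT \<Longrightarrow> 0 \<le> \<beta>' \<Longrightarrow> \<beta>' \<le> \<beta> \<Longrightarrow> \<beta>' \<in> TT"
proof -
  assume b: "\<beta> \<in> TT" "0 \<le> \<beta>'" "\<beta>' \<le> \<beta>"
  obtain x where x: "x \<in> {-1..1}" "H \<beta>' 0 x = Gf \<beta>' 0"
    using MK_attain[of "{-1..1}" \<beta>' 0] by (auto simp: Gf_def)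
  have "H \<beta>' 0 x \<le> 0"
  proof (cases "x^p \<ge> 0")
    case True
    then have "H \<beta>' 0 x \<le> H \<beta> 0 x" using b by (simp add: Hfun_def mult_right_mono)
    also have "\<dots> \<le> Gf \<beta> 0" using Gf_upper x by auto
    finally show ?thesis using b by (simp add: TT_iff)
  next
    case False
    then have "\<beta>' * x^p \<le> 0" using b by (simp add: mult_nonneg_nonpos)
    then show ?thesis using Ient_nonneg[OF x(1)] by (simp add: Hfun_def)
  qed
  then show ?thesis using x Gf_nonneg[of \<beta>' 0] b by (simp add: TT_iff)
qed

lemma TT_bdd: "\<beta> \<in> TT \<Longrightarrow> \<beta> \<le> ln 2"
proof -
  assume b: "\<beta> \<in> TT"
  have "H \<beta> 0 1 \<le> Gf \<beta> 0" by (rule Gf_upper) auto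
  then show ?thesis using b by (simp add: TT_iff Hfun_def Ient_1)
qed

lemma TT_bdd_above: "bdd_above TT" unfolding bdd_above_def using TT_bdd by blast

lemma bt_nonneg: "0 \<le> bt"
  unfolding bt_def' by (rule cSup_upper[OF TT_0 TT_bdd_above])

lemma bt_in: "bt \<in> TT"
proof -
  have "Gf bt 0 \<le> 0"
  proof (rule ccontr)
    assume "\<not> Gf bt 0 \<le> 0"
    then have g: "Gf bt 0 > 0" by simp
    have "bt - Gf bt 0 / 2 < Sup TT" using g bt_def' by simp
    then obtain \<beta> where b: "\<beta> \<in> TT" "bt - Gf bt 0 / 2 < \<beta>" using less_cSupE[of _ TT] TT_0 by blast
    have "\<beta> \<le> bt" unfolding bt_def' by (rule cSup_upper[OF b(1) TT_bdd_above])
    have "\<bar>Gf bt 0 - Gf \<beta> 0\<bar> \<le> \<bar>bt - \<beta>\<bar> + \<bar>0 - 0\<bar>"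
      unfolding Gf_def by (rule MK_lip_abs) auto
    then show False using b \<open>\<beta> \<le> bt\<close> g by (simp add: TT_iff)
  qed
  then show ?thesis using Gf_nonneg[of bt 0] bt_nonneg by (simp add: TT_iff)
qed

lemma below_bt: "0 \<le> \<beta> \<Longrightarrow> \<beta> \<le> bt \<Longrightarrow> Gf \<beta> 0 = 0"
  using TT_down[OF bt_in] by (simp add: TT_iff)

lemma above_bt: "bt < \<beta> \<Longrightarrow> Gf \<beta> 0 > 0"
proof -
  assume b: "bt < \<beta>"
  have "\<beta> \<notin> TT" using cSup_upper[OF _ TT_bdd_above, of \<beta>] b bt_def' by auto
  then show ?thesis using b bt_nonneg Gf_nonneg[of \<beta> 0] by (auto simp: TT_iff)
qed

lemma near_zero:
  assumes b: "0 < \<beta>" and x: "\<bar>x\<bar> < 1" and pos: "H \<beta> 0 x > 0"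
  shows "1 < 2 * \<beta> * \<bar>x\<bar>"
proof -
  have "x^2/2 \<le> Ient x" using Ient_quad[OF x] .
  also have "Ient x < \<beta> * x^p" using pos by (simp add: Hfun_def)
  also have "\<beta> * x^p \<le> \<beta> * (\<bar>x\<bar>^2 * \<bar>x\<bar>)"
  proof -
    have "x^p \<le> \<bar>x\<bar>^p" by (simp add: power_abs[symmetric])
    also have "\<bar>x\<bar>^p = \<bar>x\<bar>^2 * \<bar>x\<bar>^(p-2)"
    proof -
      have "\<bar>x\<bar>^2 * \<bar>x\<bar>^(p-2) = \<bar>x\<bar>^(2 + (p-2))" by (rule power_add[symmetric])
      also have "2 + (p - 2) = p" using p3 by simp
      finally show ?thesis by simp
    qed
    also have "\<bar>x\<bar>^(p-2) \<le> \<bar>x\<bar>^1" using x p3 by (intro power_decreasing) auto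
    finally have "x^p \<le> \<bar>x\<bar>^2 * \<bar>x\<bar>" by (simp add: mult_left_mono)
    then show ?thesis using b by (simp add: mult_left_mono)
  qed
  finally have a: "x^2/2 < \<beta> * (\<bar>x\<bar>^2 * \<bar>x\<bar>)" .
  have "x \<noteq> 0" using a by auto
  then have "\<bar>x\<bar>^2 > 0" by simp
  moreover have "\<bar>x\<bar>^2 * (1/2) < \<bar>x\<bar>^2 * (\<beta> * \<bar>x\<bar>)" using a by (simp add: algebra_simps)
  ultimately have "1/2 < \<beta> * \<bar>x\<bar>" by (simp add: mult_less_cancel_left_pos)
  then show ?thesis by simp
qed

lemma zero_in_GM_bt: "0 \<in> GM bt 0"
  using below_bt[OF bt_nonneg order.refl] H0 by (simp add: GM_iff)

lemma nonzero_max_bt: "\<exists>x0. x0 \<in> GM bt 0 \<and> x0 \<noteq> 0"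
proof -
  define \<delta> where "\<delta> = min (1/2) (1 / (2 * (bt + 1)))"
  have d0: "0 < \<delta>" using bt_nonneg by (simp add: \<delta>_def)
  have d1: "\<delta> \<le> 1/2" by (simp add: \<delta>_def)
  define K where "K = {-1..-\<delta>} \<union> {\<delta>..1}"
  have Kc: "compact K" unfolding K_def by (intro compact_Un compact_Icc)
  have Kn: "K \<noteq> {}" using d1 by (auto simp: K_def)
  have Ks: "K \<subseteq> {-1..1}" using d0 by (auto simp: K_def)
  have pos: "MK (bt + e) 0 K > 0" if e: "0 < e" "e \<le> 1" for e
  proof -
    define \<beta> where "\<beta> = bt + e"
    have b: "bt < \<beta>" "0 < \<beta>" "\<beta> \<le> bt + 1" using e bt_nonneg by (auto simp: \<beta>_def)
    obtain g where g: "g \<in> GM \<beta> 0" using GM_nonempty by blast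
    have gv: "H \<beta> 0 g = Gf \<beta> 0" "-1 < g" "g < 1" using g GM_interior by (auto simp: GM_iff)
    have "H \<beta> 0 g > 0" using gv above_bt[OF b(1)] by simp
    then have "1 < 2 * \<beta> * \<bar>g\<bar>" using near_zero[OF b(2)] gv by auto
    then have "1 / (2 * \<beta>) < \<bar>g\<bar>" using b by (simp add: field_simps)
    moreover have "1 / (2 * (bt + 1)) \<le> 1 / (2 * \<beta>)" using b by (intro divide_left_mono) auto
    ultimately have "\<delta> \<le> \<bar>g\<bar>" unfolding \<delta>_def by linarith
    then have "g \<in> K" using gv by (auto simp: K_def)
    then have "H \<beta> 0 g \<le> MK \<beta> 0 K" by (rule MK_upper[OF Kc Ks])
    then show ?thesis using \<open>H \<beta> 0 g > 0\<close> by (simp add: \<beta>_def)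
  qed
  have M0: "MK bt 0 K \<ge> 0"
  proof (rule ccontr)
    assume "\<not> MK bt 0 K \<ge> 0"
    then have m: "MK bt 0 K < 0" by simp
    define e where "e = min 1 (- MK bt 0 K / 2)"
    have e: "0 < e" "e \<le> 1" "e < - MK bt 0 K" using m by (auto simp: e_def)
    have "MK (bt + e) 0 K \<le> MK bt 0 K + \<bar>bt + e - bt\<bar> + \<bar>0 - 0\<bar>"
      by (rule MK_lip[OF Kc Kn Ks])
    then show False using pos[OF e(1,2)] e by simp
  qed
  obtain x0 where x0: "x0 \<in> K" "H bt 0 x0 = MK bt 0 K" using MK_attain[OF Kc Kn Ks] by blast
  have "x0 \<in> {-1..1}" using x0 Ks by auto
  then have "H bt 0 x0 \<le> Gf bt 0" by (rule Gf_upper)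
  then have "x0 \<in> GM bt 0" using x0 M0 below_bt[OF bt_nonneg order.refl] Ks by (auto simp: GM_iff)
  moreover have "x0 \<noteq> 0" using x0 d0 by (auto simp: K_def)
  ultimately show ?thesis by blast
qed

lemma H_minus_even: "even p \<Longrightarrow> H \<beta> h (-x) = H \<beta> (-h) x"
  using H_minus[of \<beta> h x] by simp

lemma GM_minus_even: "even p \<Longrightarrow> x \<in> GM \<beta> h \<longleftrightarrow> -x \<in> GM \<beta> (-h)"
proof -
  assume e: "even p"
  have "x \<in> GM \<beta> h \<longleftrightarrow> x \<in> {-1..1} \<and> (\<forall>y\<in>{-1..1}. H \<beta> h y \<le> H \<beta> h x)"
    by (simp add: global_maximizers_def)
  also have "\<dots> \<longleftrightarrow> -x \<in> {-1..1} \<and> (\<forall>y\<in>{-1..1}. H \<beta> (-h) y \<le> H \<beta> (-h) (-x))"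
  proof -
    have "(\<forall>y\<in>{-1..1}. H \<beta> h y \<le> H \<beta> h x) \<longleftrightarrow> (\<forall>y\<in>{-1..1}. H \<beta> h (-y) \<le> H \<beta> h x)"
      by (metis atLeastAtMost_iff minus_minus neg_le_iff_le)
    also have "\<dots> \<longleftrightarrow> (\<forall>y\<in>{-1..1}. H \<beta> (-h) y \<le> H \<beta> (-h) (-x))"
      using H_minus_even[OF e] by (metis minus_minus)
    finally show ?thesis by auto
  qed
  also have "\<dots> \<longleftrightarrow> -x \<in> GM \<beta> (-h)" by (simp add: global_maximizers_def)
  finally show ?thesis .
qed

lemma pos_max:
  assumes b: "0 \<le> \<beta>" and x0: "x0 \<in> GM \<beta> 0" "x0 \<noteq> 0" and G: "Gf \<beta> 0 = 0"
  shows "\<exists>y>0. y \<in> GM \<beta> 0"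
proof (cases "x0 > 0")
  case True then show ?thesis using x0 by blast
next
  case False
  then have neg: "x0 < 0" using x0 by simp
  show ?thesis
  proof (cases "even p")
    case True
    then have "-x0 \<in> GM \<beta> 0" using GM_minus_even[of x0 \<beta> 0] x0 by simp
    then show ?thesis using neg by (intro exI[of _ "-x0"]) auto
  next
    case False
    have xi: "\<bar>x0\<bar> < 1" using GM_interior[OF x0(1)] by auto
    have "x0^p \<le> 0^p" using False neg by (intro power_mono_odd) auto
    then have "x0^p \<le> 0" using p3 by (simp add: power_0_left)
    then have "\<beta> * x0^p \<le> 0" using b by (simp add: mult_nonneg_nonpos)
    moreover have "Ient x0 > 0" using Ient_quad[OF xi] x0 by (smt (verit) zero_less_power2 half_gt_zero)
    ultimately have "H \<beta> 0 x0 < 0" by (simp add: Hfun_def)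
    then show ?thesis using x0 G by (simp add: GM_iff)
  qed
qed

lemma bc_lt_bt: "bc < bt"
proof (rule ccontr)
  assume "\<not> bc < bt"
  then have le: "bt \<le> bc" by simp
  obtain x0 where x0: "x0 \<in> GM bt 0" "x0 \<noteq> 0" using nonzero_max_bt by blast
  obtain y where y: "y > 0" "y \<in> GM bt 0"
    using pos_max[OF bt_nonneg x0 below_bt[OF bt_nonneg order.refl]] by blast
  show False using TwoC[OF bt_nonneg le y(1) zero_in_GM_bt y(2) lo_le0] .
qed

end

lemma lin_aux: "(x::real) \<le> 2*a - c \<Longrightarrow> a < c/4 \<Longrightarrow> 0 < c \<Longrightarrow> x < 0" by linarith

lemma ev_at_right_real: "(\<exists>b>a. \<forall>y>a. y < b \<longrightarrow> P y) \<Longrightarrow> eventually P (at_right (a::real))"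
  using eventually_at_right[of a "a+1" P] by auto

context PP begin

lemma Df_cont: "continuous_on S (Df \<beta>)"
  unfolding continuous_on_iff
proof (intro ballI allI impI)
  fix x e assume "x \<in> S" "(0::real) < e"
  show "\<exists>d>0. \<forall>x'\<in>S. dist x' x < d \<longrightarrow> dist (Df \<beta> x') (Df \<beta> x) < e"
  proof (intro exI[of _ "e/2"] conjI ballI impI)
    fix x' assume "dist x' x < e / 2"
    then show "dist (Df \<beta> x') (Df \<beta> x) < e" using D_lip[of \<beta> x' \<beta> x] by (simp add: dist_real_def)
  qed (use \<open>0 < e\<close> in auto)
qed

lemma D_trap: "Df \<beta> h0 = 0 \<Longrightarrow> Df \<beta> h1 > 0 \<Longrightarrow> h0 < h1"
  using D_nondec[of h1 h0 \<beta>] by (cases "h0 < h1") auto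
lemma D_trap2: "Df \<beta> h0 = 0 \<Longrightarrow> Df \<beta> h1 < 0 \<Longrightarrow> h1 < h0"
  using D_nondec[of h0 h1 \<beta>] by (cases "h1 < h0") auto

definition hs where "hs = artanh ms - real p * bc * ms^(p-1)"

lemma Hp_hs: "Hp bc (hs + e) ms = e"
  by (simp add: Hp_def hs_def)

lemma D_bc_pos: "0 < e \<Longrightarrow> Df bc (hs + e) > 0"
proof -
  assume e: "0 < e"
  let ?h = "hs + e"
  have bc0: "0 \<le> bc" "bc \<le> bc" using bc_pos by auto
  have Hp_big: "Hp bc ?h z > 0" if z: "lo < z" "z < ms" for z
  proof -
    have "Hp bc ?h ms < Hp bc ?h z"
    proof (rule Hp_strict_dec)
      show "-1 < z" "z < ms" "ms < 1" using z lo_ge ms_lt1 by auto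
      fix w assume "z < w" "w < ms"
      then show "Hpp bc w < 0" using Hpp_neg_bc[OF bc0, of w] z ms_lt1 by auto
    qed
    then show ?thesis using Hp_hs e by simp
  qed
  obtain xL where xL: "lo \<le> xL" "xL \<le> ms" "H bc ?h xL = Lf bc ?h" using L_attain by blast
  have "xL = ms"
  proof (rule ccontr)
    assume "xL \<noteq> ms"
    then have "xL < ms" using xL by simp
    have "H bc ?h xL < H bc ?h ms"
    proof (rule H_strict_inc)
      show "-1 \<le> xL" "xL < ms" "ms \<le> 1" using xL lo_ge ms_lt1 \<open>xL < ms\<close> by auto
      fix z assume "xL < z" "z < ms"
      then show "Hp bc ?h z > 0" using Hp_big xL by auto
    qed
    then show False using L_upper[of ms bc ?h] lo_ms xL by simp
  qed
  then have L: "Lf bc ?h = H bc ?h ms" using xL by simp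
  have ams: "\<bar>ms\<bar> < 1" using ms_pos ms_lt1 by simp
  obtain d where d: "d > 0" "\<forall>t>0. t < d \<longrightarrow> H bc ?h ms < H bc ?h (ms + t)"
    using DERIV_pos_inc_right[OF H_deriv[OF ams, of bc ?h]] Hp_hs e by auto
  define t where "t = min d (1 - ms) / 2"
  have t: "0 < t" "t < d" "ms + t \<le> 1" using d(1) ms_lt1 unfolding t_def by (auto simp: min_def field_simps)
  have "H bc ?h ms < H bc ?h (ms + t)" using d t by auto
  also have "\<dots> \<le> Rf bc ?h" using R_upper[of "ms + t"] t by auto
  finally show ?thesis using L by (simp add: Df_def)
qed

lemma D_bc_neg: "0 < e \<Longrightarrow> Df bc (hs - e) < 0"
proof -
  assume e: "0 < e"
  let ?h = "hs + (- e)"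
  have bc0: "0 \<le> bc" "bc \<le> bc" using bc_pos by auto
  have Hp_small: "Hp bc ?h z < 0" if z: "ms < z" "z < 1" for z
  proof -
    have "Hp bc ?h z < Hp bc ?h ms"
    proof (rule Hp_strict_dec)
      show "-1 < ms" "ms < z" "z < 1" using z ms_pos by auto
      fix w assume "ms < w" "w < z"
      then show "Hpp bc w < 0" using Hpp_neg_bc[OF bc0, of w] z lo_ms by auto
    qed
    then show ?thesis using Hp_hs[of "-e"] e by simp
  qed
  obtain xR where xR: "ms \<le> xR" "xR \<le> 1" "H bc ?h xR = Rf bc ?h" using R_attain by blast
  have "xR = ms"
  proof (rule ccontr)
    assume "xR \<noteq> ms"
    then have "ms < xR" using xR by simp
    have "H bc ?h xR < H bc ?h ms"
    proof (rule H_strict_dec)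
      show "-1 \<le> ms" "ms < xR" "xR \<le> 1" using xR ms_pos \<open>ms < xR\<close> by auto
      fix z assume "ms < z" "z < xR"
      then show "Hp bc ?h z < 0" using Hp_small xR by auto
    qed
    then show False using R_upper[of ms bc ?h] ms_lt1 xR by simp
  qed
  then have R: "Rf bc ?h = H bc ?h ms" using xR by simp
  have ams: "\<bar>ms\<bar> < 1" using ms_pos ms_lt1 by simp
  obtain d where d: "d > 0" "\<forall>t>0. t < d \<longrightarrow> H bc ?h ms < H bc ?h (ms - t)"
    using DERIV_neg_dec_left[OF H_deriv[OF ams, of bc ?h]] Hp_hs[of "-e"] e by auto
  define t where "t = min d (ms - lo) / 2"
  have t: "0 < t" "t < d" "lo \<le> ms - t" using d(1) lo_ms unfolding t_def by (auto simp: min_def field_simps)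
  have "H bc ?h ms < H bc ?h (ms - t)" using d t by auto
  also have "\<dots> \<le> Lf bc ?h" using L_upper[of "ms - t"] t by auto
  finally show ?thesis using R by (simp add: Df_def)
qed

lemma D_near_bc:
  assumes e: "0 < e"
  shows "\<exists>b>bc. \<forall>\<beta>. bc < \<beta> \<longrightarrow> \<beta> < b \<longrightarrow> Df \<beta> (hs + e) > 0 \<and> Df \<beta> (hs - e) < 0"
proof -
  define a where "a = min (Df bc (hs + e)) (- Df bc (hs - e))"
  have a: "a > 0" using D_bc_pos[OF e] D_bc_neg[OF e] by (simp add: a_def)
  show ?thesis
  proof (intro exI[of _ "bc + a/4"] conjI allI impI)
    show "bc < bc + a/4" using a by simp
    fix \<beta> assume b: "bc < \<beta>" "\<beta> < bc + a/4"
    have "\<bar>Df \<beta> (hs + e) - Df bc (hs + e)\<bar> \<le> 2 * (\<bar>\<beta> - bc\<bar> + \<bar>hs + e - (hs + e)\<bar>)" by (rule D_lip)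
    then show "Df \<beta> (hs + e) > 0" using b a by (simp add: a_def)
    have "\<bar>Df \<beta> (hs - e) - Df bc (hs - e)\<bar> \<le> 2 * (\<bar>\<beta> - bc\<bar> + \<bar>hs - e - (hs - e)\<bar>)" by (rule D_lip)
    then show "Df \<beta> (hs - e) < 0" using b a by (simp add: a_def)
  qed
qed

lemma D_near:
  assumes "Df \<beta>0 h1 > 0"
  shows "\<exists>d>0. \<forall>\<beta>. \<bar>\<beta> - \<beta>0\<bar> < d \<longrightarrow> Df \<beta> h1 > 0"
proof (intro exI[of _ "Df \<beta>0 h1 / 4"] conjI allI impI)
  fix \<beta> assume b: "\<bar>\<beta> - \<beta>0\<bar> < Df \<beta>0 h1 / 4"
  have "\<bar>Df \<beta> h1 - Df \<beta>0 h1\<bar> \<le> 2 * (\<bar>\<beta> - \<beta>0\<bar> + \<bar>h1 - h1\<bar>)" by (rule D_lip)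
  then show "Df \<beta> h1 > 0" using b assms by simp
qed (use assms in simp)

lemma D_near2:
  assumes a: "Df \<beta>0 h1 < 0"
  shows "\<exists>d>0. \<forall>\<beta>. \<bar>\<beta> - \<beta>0\<bar> < d \<longrightarrow> Df \<beta> h1 < 0"
proof -
  define c where "c = - Df \<beta>0 h1"
  have c0: "c > 0" using a by (simp add: c_def)
  have "\<forall>\<beta>. \<bar>\<beta> - \<beta>0\<bar> < c / 4 \<longrightarrow> Df \<beta> h1 < 0"
  proof (intro allI impI)
    fix \<beta> assume b: "\<bar>\<beta> - \<beta>0\<bar> < c / 4"
    have "\<bar>Df \<beta> h1 - Df \<beta>0 h1\<bar> \<le> 2 * (\<bar>\<beta> - \<beta>0\<bar> + \<bar>h1 - h1\<bar>)" by (rule D_lip)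
    then have "Df \<beta> h1 \<le> 2 * \<bar>\<beta> - \<beta>0\<bar> - c" by (simp add: abs_le_iff c_def)
    then show "Df \<beta> h1 < 0" using lin_aux b c0 by blast
  qed
  then show ?thesis using c0 by (intro exI[of _ "c/4"]) auto
qed

lemma R_ge_1: "Rf \<beta> h \<ge> \<beta> + h - ln 2"
  using R_upper[of 1 \<beta> h] ms_lt1 by (simp add: Hfun_def Ient_1)

lemma L_le_pos: "0 \<le> h \<Longrightarrow> Lf \<beta> h \<le> \<bar>\<beta>\<bar> + h * ms"
proof -
  assume h: "0 \<le> h"
  obtain x where x: "lo \<le> x" "x \<le> ms" "H \<beta> h x = Lf \<beta> h" using L_attain by blast
  have x1: "x \<in> {-1..1}" using x lo_ge ms_lt1 by auto
  then have "\<bar>x\<bar> \<le> 1" by auto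
  then have "\<bar>x\<bar>^p \<le> 1" by (rule power_le_one[rotated]) auto
  then have "\<bar>x^p\<bar> \<le> 1" by (simp add: power_abs)
  then have "\<beta> * x^p \<le> \<bar>\<beta>\<bar>"
    using abs_ge_self[of "\<beta> * x^p"] mult_left_mono[of "\<bar>x^p\<bar>" 1 "\<bar>\<beta>\<bar>"] by (simp add: abs_mult)
  moreover have "h * x \<le> h * ms" using h x by (simp add: mult_left_mono)
  moreover have "Ient x \<ge> 0" using Ient_nonneg[OF x1] .
  ultimately show ?thesis using x by (simp add: Hfun_def)
qed

lemma D_big: "0 \<le> h \<Longrightarrow> Df \<beta> h \<ge> h * (1 - ms) - ln 2 - 2 * \<bar>\<beta>\<bar>"
  using R_ge_1[of \<beta> h] L_le_pos[of h \<beta>] by (simp add: Df_def algebra_simps)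

end

locale PO = PP + assumes podd: "odd p"
begin

lemma lo_o: "lo = -1" using podd by (simp add: lo_def)

lemma S_odd: "GM \<beta> h \<subseteq> {lo..1}"
  using lo_o by (auto simp: global_maximizers_def)

lemma D_small: "h \<le> 0 \<Longrightarrow> Df \<beta> h \<le> 2 * \<bar>\<beta>\<bar> + h * (1 + ms) + ln 2"
proof -
  assume h: "h \<le> 0"
  have "H \<beta> h (-1) \<le> Lf \<beta> h" using L_upper[of "-1" \<beta> h] lo_o ms_pos by simp
  then have L: "Lf \<beta> h \<ge> - \<beta> - h - ln 2" using podd by (simp add: Hfun_def Ient_m1)
  obtain x where x: "ms \<le> x" "x \<le> 1" "H \<beta> h x = Rf \<beta> h" using R_attain by blast
  have x1: "x \<in> {-1..1}" using x ms_pos by auto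
  then have "\<bar>x\<bar> \<le> 1" by auto
  then have "\<bar>x\<bar>^p \<le> 1" by (rule power_le_one[rotated]) auto
  then have "\<bar>x^p\<bar> \<le> 1" by (simp add: power_abs)
  then have "\<beta> * x^p \<le> \<bar>\<beta>\<bar>"
    using abs_ge_self[of "\<beta> * x^p"] mult_left_mono[of "\<bar>x^p\<bar>" 1 "\<bar>\<beta>\<bar>"] by (simp add: abs_mult)
  moreover have "h * x \<le> h * ms" using h x by (simp add: mult_left_mono_neg)
  moreover have "Ient x \<ge> 0" using Ient_nonneg[OF x1] .
  ultimately have "Rf \<beta> h \<le> \<bar>\<beta>\<bar> + h * ms" using x by (simp add: Hfun_def)
  then show ?thesis using L by (simp add: Df_def algebra_simps)
qed

lemma zero_exists: "\<exists>h. Df \<beta> h = 0"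
proof -
  define h1 where "h1 = (ln 2 + 2 * \<bar>\<beta>\<bar> + 1) / (1 - ms)"
  define h0 where "h0 = - (2 * \<bar>\<beta>\<bar> + ln 2 + 1) / (1 + ms)"
  have l2: "ln 2 > (0::real)" by simp
  have "ln 2 + 2 * \<bar>\<beta>\<bar> + 1 \<ge> 0" using l2 by simp
  then have h1p: "h1 \<ge> 0" unfolding h1_def by (rule divide_nonneg_pos) (use ms_lt1 in auto)
  have "- (2 * \<bar>\<beta>\<bar> + ln 2 + 1) \<le> 0" using l2 by (simp del: minus_add_distrib)
  then have h0n: "h0 \<le> 0" unfolding h0_def by (rule divide_nonpos_pos) (use ms_pos in auto)
  have "h1 * (1 - ms) = ln 2 + 2 * \<bar>\<beta>\<bar> + 1" using ms_lt1 by (simp add: h1_def)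
  then have D1: "Df \<beta> h1 \<ge> 0" using D_big[OF h1p, of \<beta>] by simp
  have "h0 * (1 + ms) = - (2 * \<bar>\<beta>\<bar> + ln 2 + 1)" using ms_pos by (simp add: h0_def)
  then have D0: "Df \<beta> h0 \<le> 0" using D_small[OF h0n, of \<beta>] by simp
  show ?thesis using IVT'[of "Df \<beta>" h0 0 h1, OF D0 D1] h1p h0n Df_cont by auto
qed

definition phio where "phio \<beta> = (THE h. Df \<beta> h = 0)"

lemma phio: "bc < \<beta> \<Longrightarrow> Df \<beta> (phio \<beta>) = 0"
  and phio_unique: "bc < \<beta> \<Longrightarrow> Df \<beta> h = 0 \<Longrightarrow> h = phio \<beta>"
proof -
  assume b: "bc < \<beta>"
  have uq: "h = h'" if "Df \<beta> h = 0" "Df \<beta> h' = 0" for h h'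
    using Dz(1)[OF b S_odd that(1), of h'] Dz(2)[OF b S_odd that(1), of h'] that(2)
    by (cases h h' rule: linorder_cases) auto
  obtain h0 where h0: "Df \<beta> h0 = 0" using zero_exists by blast
  have "Df \<beta> (THE h. Df \<beta> h = 0) = 0" by (rule theI[of _ h0]) (use h0 uq in auto)
  then show "Df \<beta> (phio \<beta>) = 0" by (simp add: phio_def)
  then show "Df \<beta> h = 0 \<Longrightarrow> h = phio \<beta>" using uq by blast
qed

lemma three_GM: "bc < \<beta> \<Longrightarrow> a \<in> GM \<beta> h \<Longrightarrow> b \<in> GM \<beta> h \<Longrightarrow> c \<in> GM \<beta> h \<Longrightarrow>
   a \<noteq> b \<Longrightarrow> b \<noteq> c \<Longrightarrow> a \<noteq> c \<Longrightarrow> False"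
proof -
  assume b: "bc < \<beta>" and m: "a \<in> GM \<beta> h" "b \<in> GM \<beta> h" "c \<in> GM \<beta> h" and d: "a \<noteq> b" "b \<noteq> c" "a \<noteq> c"
  have A: "\<And>x y z. x < y \<Longrightarrow> y < z \<Longrightarrow> x \<in> GM \<beta> h \<Longrightarrow> y \<in> GM \<beta> h \<Longrightarrow> z \<in> GM \<beta> h \<Longrightarrow> False"
  proof -
    fix x y z assume xyz: "x < y" "y < z" "x \<in> GM \<beta> h" "y \<in> GM \<beta> h" "z \<in> GM \<beta> h"
    have "lo \<le> x" using S_odd[of \<beta> h] xyz(3) by auto
    then show False using AtMost2[OF b xyz] by blast
  qed
  show False
  proof (cases "a < b")
    case True
    show False
    proof (cases "c < a")
      case True then show False using A[of c a b] m \<open>a < b\<close> by blast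
    next
      case False
      then have "a < c" using d by simp
      show False
      proof (cases "c < b")
        case True then show False using A[of a c b] m \<open>a < c\<close> by blast
      next
        case False then have "b < c" using d by simp
        then show False using A[of a b c] m \<open>a < b\<close> by blast
      qed
    qed
  next
    case False
    then have ba: "b < a" using d by simp
    show False
    proof (cases "c < b")
      case True then show False using A[of c b a] m ba by blast
    next
      case False
      then have "b < c" using d by simp
      show False
      proof (cases "c < a")
        case True then show False using A[of b c a] m \<open>b < c\<close> by blast
      next
        case False then have "a < c" using d by simp
        then show False using A[of b a c] m ba by blast
      qed
    qed
  qed
qed

lemma Cplus_odd: "Cplus p = {(\<beta>, h). bc < \<beta> \<and> h = phio \<beta>}"
proof safe
  fix \<beta> h assume "(\<beta>, h) \<in> Cplus p"
  then have b0: "0 \<le> \<beta>" and c: "card (GM \<beta> h) = 2" by (auto simp: Cplus_def)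
  from c obtain a c where ac: "GM \<beta> h = {a, c}" "a \<noteq> c" by (auto simp: card_2_iff)
  show b: "bc < \<beta>"
  proof (rule ccontr)
    assume "\<not> bc < \<beta>"
    then have le: "\<beta> \<le> bc" by simp
    have "a \<in> GM \<beta> h" "c \<in> GM \<beta> h" using ac by auto
    moreover have "lo \<le> a" "lo \<le> c" using S_odd[of \<beta> h] ac by auto
    ultimately show False using TwoC[OF b0 le, of a c h] TwoC[OF b0 le, of c a h] ac(2)
      by (cases "a < c") auto
  qed
  show "h = phio \<beta>" using CardD[OF b S_odd] c phio_unique[OF b] by auto
next
  fix \<beta> assume b: "bc < \<beta>"
  then have "card (GM \<beta> (phio \<beta>)) = 2" using CardD[OF b S_odd] phio[OF b] by auto
  then show "(\<beta>, phio \<beta>) \<in> Cplus p" using b bc_pos by (auto simp: Cplus_def)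
qed

lemma phio_dec: "bc < \<beta>1 \<Longrightarrow> \<beta>1 < \<beta>2 \<Longrightarrow> phio \<beta>2 < phio \<beta>1"
proof -
  assume b: "bc < \<beta>1" "\<beta>1 < \<beta>2"
  let ?h = "phio \<beta>1"
  obtain xR where xR: "ms \<le> xR" "xR \<le> 1" "H \<beta>1 ?h xR = Rf \<beta>1 ?h" using R_attain by blast
  obtain xL where xL: "lo \<le> xL" "xL \<le> ms" "H \<beta>2 ?h xL = Lf \<beta>2 ?h" using L_attain by blast
  have "ms < xR" using D0_attain(2)[OF b(1) S_odd phio[OF b(1)] xR] by auto
  then have "ms^p < xR^p" using ms_pos by (intro power_strict_mono) (use p3 in auto)
  moreover have "xL^p \<le> ms^p" using podd xL by (intro power_mono_odd) auto
  ultimately have "(\<beta>2 - \<beta>1) * (xR^p - xL^p) > 0" using b by simp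
  then have "Df \<beta>2 ?h > 0" using Dmono_b[OF xR xL] phio[OF b(1)] by simp
  then show ?thesis using D_trap[OF phio] b by auto
qed

lemma phio_cont: "continuous_on {bc<..} phio"
  unfolding continuous_on_iff
proof (intro ballI allI impI)
  fix \<beta>0 e assume b0: "\<beta>0 \<in> {bc<..}" and e: "(0::real) < e"
  have b0': "bc < \<beta>0" using b0 by simp
  have p1: "Df \<beta>0 (phio \<beta>0 + e) > 0" using Dz(1)[OF b0' S_odd phio[OF b0']] e by simp
  have p2: "Df \<beta>0 (phio \<beta>0 - e) < 0" using Dz(2)[OF b0' S_odd phio[OF b0']] e by simp
  obtain d1 where d1: "d1 > 0" "\<forall>\<beta>. \<bar>\<beta> - \<beta>0\<bar> < d1 \<longrightarrow> Df \<beta> (phio \<beta>0 + e) > 0" using D_near[OF p1] by blast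
  obtain d2 where d2: "d2 > 0" "\<forall>\<beta>. \<bar>\<beta> - \<beta>0\<bar> < d2 \<longrightarrow> Df \<beta> (phio \<beta>0 - e) < 0" using D_near2[OF p2] by blast
  show "\<exists>d>0. \<forall>x'\<in>{bc<..}. dist x' \<beta>0 < d \<longrightarrow> dist (phio x') (phio \<beta>0) < e"
  proof (intro exI[of _ "min d1 d2"] conjI ballI impI)
    fix \<beta> assume b: "\<beta> \<in> {bc<..}" "dist \<beta> \<beta>0 < min d1 d2"
    then have "Df \<beta> (phio \<beta>0 + e) > 0" "Df \<beta> (phio \<beta>0 - e) < 0" using d1 d2 by (auto simp: dist_real_def)
    then have "phio \<beta> < phio \<beta>0 + e" "phio \<beta>0 - e < phio \<beta>"
      using D_trap[OF phio] D_trap2[OF phio] b by auto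
    then show "dist (phio \<beta>) (phio \<beta>0) < e" by (simp add: dist_real_def abs_less_iff)
  qed (use d1 d2 in auto)
qed

lemma phio_bt: "phio bt = 0"
proof -
  obtain x0 where x0: "x0 \<in> GM bt 0" "x0 \<noteq> 0" using nonzero_max_bt by blast
  have "GM bt 0 = {0, x0}"
    using three_GM[OF bc_lt_bt zero_in_GM_bt x0(1)] x0 zero_in_GM_bt by blast
  then have "card (GM bt 0) = 2" using x0 by simp
  then have "(bt, 0) \<in> Cplus p" using bt_nonneg by (simp add: Cplus_def)
  then show ?thesis using Cplus_odd by simp
qed

lemma phio_bot: "filterlim phio at_bot at_top"
  unfolding filterlim_at_bot
proof
  fix M :: real
  have msp: "ms^p < 1" using ms_pos ms_lt1 p3 by (simp add: power_less_one_iff)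
  define B where "B = max (bc + 1) ((\<bar>M\<bar> - M + ln 2 + 1) / (1 - ms^p))"
  show "eventually (\<lambda>\<beta>. phio \<beta> \<le> M) at_top"
    unfolding eventually_at_top_linorder
  proof (intro exI[of _ B] allI impI)
    fix \<beta> assume b: "B \<le> \<beta>"
    have b1: "bc < \<beta>" using b by (simp add: B_def)
    have b0: "0 \<le> \<beta>" using b1 bc_pos by simp
    have "(\<bar>M\<bar> - M + ln 2 + 1) / (1 - ms^p) \<le> \<beta>" using b by (simp add: B_def)
    then have bb: "\<bar>M\<bar> - M + ln 2 + 1 \<le> \<beta> * (1 - ms^p)" using msp by (simp add: field_simps)
    obtain x where x: "lo \<le> x" "x \<le> ms" "H \<beta> M x = Lf \<beta> M" using L_attain by blast
    have x1: "x \<in> {-1..1}" using x lo_ge ms_lt1 by auto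
    have "x^p \<le> ms^p" using podd x by (intro power_mono_odd) auto
    then have "\<beta> * x^p \<le> \<beta> * ms^p" using b0 by (simp add: mult_left_mono)
    moreover have "M * x \<le> \<bar>M\<bar>"
    proof -
      have "\<bar>x\<bar> \<le> 1" using x1 by auto
      then have "\<bar>M\<bar> * \<bar>x\<bar> \<le> \<bar>M\<bar> * 1" by (intro mult_left_mono) auto
      then show ?thesis using abs_ge_self[of "M * x"] by (simp add: abs_mult)
    qed
    moreover have "Ient x \<ge> 0" using Ient_nonneg[OF x1] .
    ultimately have "Lf \<beta> M \<le> \<beta> * ms^p + \<bar>M\<bar>" using x by (simp add: Hfun_def)
    then have "Df \<beta> M > 0" using R_ge_1[of \<beta> M] bb by (simp add: Df_def algebra_simps)
    then have "phio \<beta> < M" using D_trap[OF phio[OF b1]] by blast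
    then show "phio \<beta> \<le> M" by simp
  qed
qed

lemma phio_lim: "(phio \<longlongrightarrow> hs) (at_right bc)"
  unfolding tendsto_iff
proof (intro allI impI)
  fix e :: real assume e: "0 < e"
  obtain b where b: "b > bc" "\<forall>\<beta>. bc < \<beta> \<longrightarrow> \<beta> < b \<longrightarrow> Df \<beta> (hs + e) > 0 \<and> Df \<beta> (hs - e) < 0"
    using D_near_bc[OF e] by blast
  show "eventually (\<lambda>\<beta>. dist (phio \<beta>) hs < e) (at_right bc)"
  proof (rule ev_at_right_real, intro exI[of _ b] conjI allI impI)
    fix \<beta> assume bb: "bc < \<beta>" "\<beta> < b"
    then have "phio \<beta> < hs + e" "hs - e < phio \<beta>"
      using b(2) D_trap[OF phio[OF bb(1)]] D_trap2[OF phio[OF bb(1)]] by auto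
    then show "dist (phio \<beta>) hs < e" by (simp add: dist_real_def abs_less_iff)
  qed (use b in auto)
qed

end

locale PE = PP + assumes peven: "even p"
begin

lemma lo_e: "lo = 0" using peven by (simp add: lo_def)

lemma pow_pos: "z \<noteq> 0 \<Longrightarrow> z^p > (0::real)"
proof -
  assume z: "z \<noteq> 0"
  have "\<bar>z\<bar>^p > 0" using z by simp
  then show ?thesis using power_even_abs[OF peven, of z] by simp
qed

lemma GM_pos: "0 < h \<Longrightarrow> x \<in> GM \<beta> h \<Longrightarrow> 0 < x"
proof (rule ccontr)
  assume h: "0 < h" and x: "x \<in> GM \<beta> h" and n: "\<not> 0 < x"
  have xv: "x \<in> {-1..1}" "H \<beta> h x = Gf \<beta> h" using x by (auto simp: GM_iff)
  show False
  proof (cases "x = 0")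
    case True
    have "Hp \<beta> h 0 = h" using p3 by (simp add: Hp_def power_0_left)
    then show False using GM_crit[OF x] True h by simp
  next
    case False
    then have xn: "x < 0" using n by simp
    have "H \<beta> h (-x) = H \<beta> h x + (-h - h) * x"
      using H_minus_even[OF peven, of \<beta> h x] H_shift_h[of \<beta> "-h" x h] by simp
    also have "\<dots> > H \<beta> h x" using h xn mult_pos_neg[of h x] by simp
    finally have "H \<beta> h (-x) > Gf \<beta> h" using xv by simp
    moreover have "H \<beta> h (-x) \<le> Gf \<beta> h" using xv by (intro Gf_upper) auto
    ultimately show False by simp
  qed
qed

lemma S_pos: "0 < h \<Longrightarrow> GM \<beta> h \<subseteq> {lo..1}"
  using GM_pos lo_e by (force simp: global_maximizers_def)

lemma GM_abs: "x \<in> GM \<beta> 0 \<Longrightarrow> \<bar>x\<bar> \<in> GM \<beta> 0"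
  using GM_minus_even[OF peven, of x \<beta> 0] by (cases "x \<ge> 0") auto

lemma NC: "0 \<le> \<beta> \<Longrightarrow> y \<in> GM \<beta> 0 \<Longrightarrow> 0 < y \<Longrightarrow> y \<le> ms \<Longrightarrow> False"
proof -
  assume b: "0 \<le> \<beta>" and y: "y \<in> GM \<beta> 0" "0 < y" "y \<le> ms"
  have c: "y \<le> 0 \<or> real p * (real p - 1) * \<beta> * kf y \<le> 1" using GM_kf[OF y(1,2)] by simp
  have "Hp \<beta> 0 y < Hp \<beta> 0 0"
  proof (rule Hp_strict_dec)
    show "-1 < (0::real)" "0 < y" "y < 1" using y ms_lt1 by auto
    fix z assume "0 < z" "z < y"
    then show "Hpp \<beta> z < 0" using Hpp_neg_left[OF b _ _ y(3) c] lo_e by auto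
  qed
  moreover have "Hp \<beta> 0 0 = 0" using p3 by (simp add: Hp_def power_0_left)
  ultimately show False using GM_crit[OF y(1)] by simp
qed

lemma E_b: assumes b: "0 \<le> \<beta>" "\<beta> < bt" shows "Df \<beta> 0 < 0" and "GM \<beta> 0 = {0}"
proof -
  define \<beta>' where "\<beta>' = (\<beta> + bt) / 2"
  have b': "0 \<le> \<beta>'" "\<beta>' \<le> bt" "\<beta> < \<beta>'" using b by (auto simp: \<beta>'_def)
  have G: "Gf \<beta> 0 = 0" "Gf \<beta>' 0 = 0" using below_bt b b' by auto
  have bigger: "H \<beta>' 0 z > 0" if "H \<beta> 0 z = 0" "z \<noteq> 0" for z
    using H_shift_b[of \<beta>' 0 z \<beta>] that pow_pos[of z] b' by simp
  have L: "Lf \<beta> 0 = 0" using L_upper[of 0 \<beta> 0] L_le_G[of \<beta> 0] G H0 lo_e ms_pos by auto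
  obtain y where y: "ms \<le> y" "y \<le> 1" "H \<beta> 0 y = Rf \<beta> 0" using R_attain by blast
  have "Rf \<beta> 0 \<noteq> 0"
  proof
    assume "Rf \<beta> 0 = 0"
    then have "H \<beta>' 0 y > 0" using bigger[of y] y ms_pos by auto
    moreover have "H \<beta>' 0 y \<le> Gf \<beta>' 0" using y ms_pos by (intro Gf_upper) auto
    ultimately show False using G by simp
  qed
  then have "Rf \<beta> 0 < 0" using R_le_G[of \<beta> 0] G by simp
  then show "Df \<beta> 0 < 0" using L by (simp add: Df_def)
  have "0 \<in> GM \<beta> 0" using G H0 by (simp add: GM_iff)
  moreover have "z = 0" if z: "z \<in> GM \<beta> 0" for z
  proof (rule ccontr)
    assume "z \<noteq> 0"
    have zv: "z \<in> {-1..1}" "H \<beta> 0 z = 0" using z G by (auto simp: GM_iff)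
    then have "H \<beta>' 0 z > 0" using bigger \<open>z \<noteq> 0\<close> by auto
    moreover have "H \<beta>' 0 z \<le> Gf \<beta>' 0" using zv by (intro Gf_upper) auto
    ultimately show False using G by simp
  qed
  ultimately show "GM \<beta> 0 = {0}" by blast
qed

lemma E_a: assumes b: "bt < \<beta>" shows "Df \<beta> 0 > 0" and "card (GM \<beta> 0) = 2"
proof -
  have b0: "0 \<le> \<beta>" using b bt_nonneg by simp
  have G: "Gf \<beta> 0 > 0" using above_bt[OF b] .
  obtain g where g: "g \<in> GM \<beta> 0" using GM_nonempty by blast
  have "g \<noteq> 0" using g G H0 by (auto simp: GM_iff)
  define y where "y = \<bar>g\<bar>"
  have y: "y \<in> GM \<beta> 0" "0 < y" using GM_abs[OF g] \<open>g \<noteq> 0\<close> by (auto simp: y_def)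
  have yms: "ms < y" using NC[OF b0 y(1) y(2)] by force
  have yv: "H \<beta> 0 y = Gf \<beta> 0" "y \<le> 1" using y by (auto simp: GM_iff)
  have R: "Rf \<beta> 0 = Gf \<beta> 0" using R_upper[of y \<beta> 0] R_le_G[of \<beta> 0] yms yv by auto
  obtain z where z: "lo \<le> z" "z \<le> ms" "H \<beta> 0 z = Lf \<beta> 0" using L_attain by blast
  have "Lf \<beta> 0 \<noteq> Gf \<beta> 0"
  proof
    assume e: "Lf \<beta> 0 = Gf \<beta> 0"
    then have zg: "z \<in> GM \<beta> 0" using z lo_e ms_lt1 by (auto simp: GM_iff)
    then have "z \<noteq> 0" using e z G H0 by auto
    then show False using NC[OF b0 zg] z lo_e by auto
  qed
  then show "Df \<beta> 0 > 0" using L_le_G[of \<beta> 0] R by (simp add: Df_def)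
  have "GM \<beta> 0 = {y, -y}"
  proof safe
    fix w assume w: "w \<in> GM \<beta> 0" "w \<noteq> y"
    have "w \<noteq> 0" using w G H0 by (auto simp: GM_iff)
    then have aw: "\<bar>w\<bar> \<in> GM \<beta> 0" "0 < \<bar>w\<bar>" using GM_abs[OF w(1)] by auto
    have "ms < \<bar>w\<bar>" using NC[OF b0 aw] by force
    have "\<bar>w\<bar> = y"
    proof (rule ccontr)
      assume ne: "\<bar>w\<bar> \<noteq> y"
      show False
      proof (cases "\<bar>w\<bar> < y")
        case True then show False using TwoR[OF b0 True aw(1) y(1)] \<open>ms < \<bar>w\<bar>\<close> by simp
      next
        case False then have "y < \<bar>w\<bar>" using ne by simp
        then show False using TwoR[OF b0 _ y(1) aw(1)] yms by simp
      qed
    qed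
    then show "w = - y" using w by auto
  next
    show "y \<in> GM \<beta> 0" using y by simp
    show "- y \<in> GM \<beta> 0" using GM_minus_even[OF peven, of y \<beta> 0] y by simp
  qed
  then show "card (GM \<beta> 0) = 2" using y by simp
qed

lemma E_c: "Df bt 0 = 0" and E_c2: "0 < h \<Longrightarrow> Df bt h > 0" and E_c3: "card (GM bt 0) \<noteq> 2"
proof -
  obtain x0 where x0: "x0 \<in> GM bt 0" "x0 \<noteq> 0" using nonzero_max_bt by blast
  define y0 where "y0 = \<bar>x0\<bar>"
  have y0: "y0 \<in> GM bt 0" "0 < y0" using GM_abs[OF x0(1)] x0 by (auto simp: y0_def)
  have yms: "ms < y0" using NC[OF bt_nonneg y0] by force
  have G: "Gf bt 0 = 0" using below_bt[OF bt_nonneg order.refl] .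
  have yv: "H bt 0 y0 = 0" "y0 \<le> 1" using y0 G by (auto simp: GM_iff)
  have R: "Rf bt 0 = 0" using R_upper[of y0 bt 0] R_le_G[of bt 0] yms yv G by auto
  have L: "Lf bt 0 = 0" using L_upper[of 0 bt 0] L_le_G[of bt 0] G H0 lo_e ms_pos by auto
  show D: "Df bt 0 = 0" using R L by (simp add: Df_def)
  show "0 < h \<Longrightarrow> Df bt h > 0"
  proof -
    assume h: "0 < h"
    obtain xL where xL: "lo \<le> xL" "xL \<le> ms" "H bt h xL = Lf bt h" using L_attain by blast
    have xR: "ms \<le> y0" "y0 \<le> 1" "H bt 0 y0 = Rf bt 0" using yms yv R by auto
    have "(h - 0) * (y0 - xL) > 0" using h xL yms by simp
    then show ?thesis using Dmono_h[OF xR xL] D by simp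
  qed
  show "card (GM bt 0) \<noteq> 2"
  proof
    assume c: "card (GM bt 0) = 2"
    have m: "- y0 \<in> GM bt 0" using GM_minus_even[OF peven, of y0 bt 0] y0 by simp
    obtain a b where ab: "GM bt 0 = {a, b}" using c by (auto simp: card_2_iff)
    have "{0, y0, -y0} \<subseteq> {a, b}" using ab m y0 zero_in_GM_bt by auto
    then show False using y0(2) by auto
  qed
qed

lemma zero_exists_e: assumes b: "bc < \<beta>" "\<beta> < bt" shows "\<exists>h>0. Df \<beta> h = 0"
proof -
  define h1 where "h1 = (ln 2 + 2 * \<bar>\<beta>\<bar> + 1) / (1 - ms)"
  have l2: "ln 2 > (0::real)" by simp
  have "ln 2 + 2 * \<bar>\<beta>\<bar> + 1 \<ge> 0" using l2 by simp
  then have h1p: "h1 \<ge> 0" unfolding h1_def by (rule divide_nonneg_pos) (use ms_lt1 in auto)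
  have "h1 * (1 - ms) = ln 2 + 2 * \<bar>\<beta>\<bar> + 1" using ms_lt1 by (simp add: h1_def)
  then have D1: "Df \<beta> h1 \<ge> 0" using D_big[OF h1p, of \<beta>] by simp
  have D0: "Df \<beta> 0 < 0" using E_b(1) b bc_pos by simp
  obtain h where h: "0 \<le> h" "h \<le> h1" "Df \<beta> h = 0"
    using IVT'[of "Df \<beta>" 0 0 h1] D0 D1 h1p Df_cont by force
  then have "h \<noteq> 0" using D0 by auto
  then show ?thesis using h by (intro exI[of _ h]) auto
qed

definition phie where "phie \<beta> = (if \<beta> < bt then (THE h. 0 < h \<and> Df \<beta> h = 0) else 0)"

lemma phie: assumes b: "bc < \<beta>" "\<beta> < bt" shows "0 < phie \<beta>" "Df \<beta> (phie \<beta>) = 0"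
  and "0 < h \<Longrightarrow> Df \<beta> h = 0 \<Longrightarrow> h = phie \<beta>"
proof -
  have uq: "h = h'" if "0 < h" "Df \<beta> h = 0" "0 < h'" "Df \<beta> h' = 0" for h h'
    using Dz(1)[OF b(1) S_pos[OF that(1)] that(2), of h'] Dz(2)[OF b(1) S_pos[OF that(1)] that(2), of h'] that
    by (cases h h' rule: linorder_cases) auto
  obtain h0 where h0: "0 < h0" "Df \<beta> h0 = 0" using zero_exists_e[OF b] by blast
  have th: "0 < (THE h. 0 < h \<and> Df \<beta> h = 0) \<and> Df \<beta> (THE h. 0 < h \<and> Df \<beta> h = 0) = 0"
    by (rule theI[of _ h0]) (use h0 uq in auto)
  then show "0 < phie \<beta>" "Df \<beta> (phie \<beta>) = 0" using b by (auto simp: phie_def)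
  then show "0 < h \<Longrightarrow> Df \<beta> h = 0 \<Longrightarrow> h = phie \<beta>" using uq by blast
qed

lemma phie_ge: "bt \<le> \<beta> \<Longrightarrow> phie \<beta> = 0" by (simp add: phie_def)

lemma card_minus: "card (GM \<beta> (-h)) = card (GM \<beta> h)"
proof -
  have "GM \<beta> (-h) = uminus ` GM \<beta> h"
  proof safe
    fix x assume "x \<in> GM \<beta> (-h)"
    then have "-x \<in> GM \<beta> h" using GM_minus_even[OF peven, of "-x" \<beta> h] by simp
    then show "x \<in> uminus ` GM \<beta> h" by (metis image_eqI minus_minus)
  next
    fix x assume "x \<in> GM \<beta> h"
    then show "-x \<in> GM \<beta> (-h)" using GM_minus_even[OF peven, of x \<beta> h] by simp
  qed
  then show ?thesis by (simp add: card_image)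
qed

lemma pos_case: assumes b0: "0 \<le> \<beta>" and h: "0 < h"
  shows "card (GM \<beta> h) = 2 \<longleftrightarrow> bc < \<beta> \<and> \<beta> < bt \<and> h = phie \<beta>"
proof
  assume c: "card (GM \<beta> h) = 2"
  from c obtain a c where ac: "GM \<beta> h = {a, c}" "a \<noteq> c" by (auto simp: card_2_iff)
  have b: "bc < \<beta>"
  proof (rule ccontr)
    assume "\<not> bc < \<beta>"
    then have le: "\<beta> \<le> bc" by simp
    have "a \<in> GM \<beta> h" "c \<in> GM \<beta> h" using ac by auto
    moreover have "lo \<le> a" "lo \<le> c" using S_pos[OF h, of \<beta>] ac by auto
    ultimately show False using TwoC[OF b0 le, of a c h] TwoC[OF b0 le, of c a h] ac(2)
      by (cases "a < c") auto
  qed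
  have D: "Df \<beta> h = 0" using CardD[OF b S_pos[OF h]] c by simp
  have "\<beta> < bt"
  proof (rule ccontr)
    assume "\<not> \<beta> < bt"
    then have "bt = \<beta> \<or> bt < \<beta>" by auto
    then show False
    proof
      assume "bt = \<beta>" then show False using E_c2[OF h] D by simp
    next
      assume "bt < \<beta>" then show False using E_a(1)[OF \<open>bt < \<beta>\<close>] D_nondec[of 0 h \<beta>] h D by simp
    qed
  qed
  then show "bc < \<beta> \<and> \<beta> < bt \<and> h = phie \<beta>" using b phie(3)[OF b _ h D] by auto
next
  assume a: "bc < \<beta> \<and> \<beta> < bt \<and> h = phie \<beta>"
  then show "card (GM \<beta> h) = 2" using CardD[OF _ S_pos[OF h]] phie(2)[of \<beta>] by auto
qed

lemma zero_case: assumes b0: "0 \<le> \<beta>" shows "card (GM \<beta> 0) = 2 \<longleftrightarrow> bt < \<beta>"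
proof (cases "\<beta> < bt")
  case True then show ?thesis using E_b(2)[OF b0 True] by simp
next
  case False
  then show ?thesis using E_a(2) E_c3 by (cases "\<beta> = bt") auto
qed

lemma Cplus_even: "Cplus p = {(\<beta>, h). bc < \<beta> \<and> \<beta> \<noteq> bt \<and> (h = phie \<beta> \<or> h = - phie \<beta>)}"
proof -
  have key: "(\<beta>, h) \<in> Cplus p \<longleftrightarrow> bc < \<beta> \<and> \<beta> \<noteq> bt \<and> (h = phie \<beta> \<or> h = - phie \<beta>)" for \<beta> h
  proof (cases "0 \<le> \<beta>")
    case False
    then show ?thesis using bc_pos by (auto simp: Cplus_def)
  next
    case b0: True
    have iff: "(\<beta>, h) \<in> Cplus p \<longleftrightarrow> card (GM \<beta> h) = 2" using b0 by (simp add: Cplus_def)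
    show ?thesis
    proof (cases "h = 0")
      case True
      have "bc < \<beta> \<and> \<beta> \<noteq> bt \<and> (0 = phie \<beta> \<or> 0 = - phie \<beta>) \<longleftrightarrow> bt < \<beta>"
      proof
        assume a: "bc < \<beta> \<and> \<beta> \<noteq> bt \<and> (0 = phie \<beta> \<or> 0 = - phie \<beta>)"
        show "bt < \<beta>"
        proof (rule ccontr)
          assume "\<not> bt < \<beta>"
          then have "\<beta> < bt" using a by auto
          then show False using phie(1)[of \<beta>] a by auto
        qed
      next
        assume "bt < \<beta>"
        then show "bc < \<beta> \<and> \<beta> \<noteq> bt \<and> (0 = phie \<beta> \<or> 0 = - phie \<beta>)"
          using bc_lt_bt phie_ge[of \<beta>] by auto
      qed
      then show ?thesis using iff zero_case[OF b0] True by simp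
    next
      case False
      show ?thesis
      proof (cases "0 < h")
        case True
        have "bc < \<beta> \<and> \<beta> < bt \<and> h = phie \<beta> \<longleftrightarrow> bc < \<beta> \<and> \<beta> \<noteq> bt \<and> (h = phie \<beta> \<or> h = - phie \<beta>)"
        proof
          assume a: "bc < \<beta> \<and> \<beta> \<noteq> bt \<and> (h = phie \<beta> \<or> h = - phie \<beta>)"
          have "\<beta> < bt"
          proof (rule ccontr)
            assume "\<not> \<beta> < bt"
            then show False using phie_ge[of \<beta>] a True by auto
          qed
          moreover have "h = phie \<beta>" using a phie(1)[of \<beta>] True calculation by auto
          ultimately show "bc < \<beta> \<and> \<beta> < bt \<and> h = phie \<beta>" using a by auto
        qed auto
        then show ?thesis using iff pos_case[OF b0 True] by simp
      next
        case False
        then have hn: "0 < -h" using \<open>h \<noteq> 0\<close> by simp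
        have "bc < \<beta> \<and> \<beta> < bt \<and> -h = phie \<beta> \<longleftrightarrow> bc < \<beta> \<and> \<beta> \<noteq> bt \<and> (h = phie \<beta> \<or> h = - phie \<beta>)"
        proof
          assume a: "bc < \<beta> \<and> \<beta> \<noteq> bt \<and> (h = phie \<beta> \<or> h = - phie \<beta>)"
          have "\<beta> < bt"
          proof (rule ccontr)
            assume "\<not> \<beta> < bt"
            then show False using phie_ge[of \<beta>] a hn by auto
          qed
          moreover have "-h = phie \<beta>" using a phie(1)[of \<beta>] hn calculation by auto
          ultimately show "bc < \<beta> \<and> \<beta> < bt \<and> -h = phie \<beta>" using a by auto
        qed auto
        then show ?thesis using iff pos_case[OF b0 hn] card_minus[of \<beta> h] by simp
      qed
    qed
  qed
  show ?thesis
  proof (rule set_eqI)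
    fix x :: "real \<times> real"
    obtain \<beta> h where x: "x = (\<beta>, h)" by (cases x)
    show "x \<in> Cplus p \<longleftrightarrow> x \<in> {(\<beta>, h). bc < \<beta> \<and> \<beta> \<noteq> bt \<and> (h = phie \<beta> \<or> h = - phie \<beta>)}"
      unfolding x key by simp
  qed
qed

lemma phie_nonneg: "bc < \<beta> \<Longrightarrow> phie \<beta> \<ge> 0"
  using phie(1)[of \<beta>] phie_ge[of \<beta>] by (cases "\<beta> < bt") auto

lemma phie_dec: "bc < \<beta>1 \<Longrightarrow> \<beta>1 < \<beta>2 \<Longrightarrow> \<beta>2 < bt \<Longrightarrow> phie \<beta>2 < phie \<beta>1"
proof -
  assume b: "bc < \<beta>1" "\<beta>1 < \<beta>2" "\<beta>2 < bt"
  let ?h = "phie \<beta>1"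
  have b1: "bc < \<beta>1" "\<beta>1 < bt" using b by auto
  have hp: "0 < ?h" and D1: "Df \<beta>1 ?h = 0" using phie(1)[OF b1] phie(2)[OF b1] by auto
  obtain xR where xR: "ms \<le> xR" "xR \<le> 1" "H \<beta>1 ?h xR = Rf \<beta>1 ?h" using R_attain by blast
  obtain xL where xL: "lo \<le> xL" "xL \<le> ms" "H \<beta>2 ?h xL = Lf \<beta>2 ?h" using L_attain by blast
  have "ms < xR" using D0_attain(2)[OF b(1) S_pos[OF hp] D1 xR] by auto
  then have "ms^p < xR^p" using ms_pos by (intro power_strict_mono) (use p3 in auto)
  moreover have "xL^p \<le> ms^p" using xL lo_e by (intro power_mono) auto
  ultimately have "(\<beta>2 - \<beta>1) * (xR^p - xL^p) > 0" using b by simp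
  then have "Df \<beta>2 ?h > 0" using Dmono_b[OF xR xL] D1 by simp
  moreover have b2: "bc < \<beta>2" "\<beta>2 < bt" using b by auto
  ultimately show ?thesis using D_trap[OF phie(2)[OF b2]] by blast
qed

lemma phie_cont: "continuous_on {bc<..} phie"
  unfolding continuous_on_iff
proof (intro ballI allI impI)
  fix \<beta>0 e assume b0: "\<beta>0 \<in> {bc<..}" and e: "(0::real) < e"
  have b0': "bc < \<beta>0" using b0 by simp
  show "\<exists>d>0. \<forall>x'\<in>{bc<..}. dist x' \<beta>0 < d \<longrightarrow> dist (phie x') (phie \<beta>0) < e"
  proof (cases "\<beta>0 < bt")
    case lt: True
    have f0: "0 < phie \<beta>0" "Df \<beta>0 (phie \<beta>0) = 0" using phie(1)[OF b0' lt] phie(2)[OF b0' lt] by auto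
    define e' where "e' = min e (phie \<beta>0 / 2)"
    have e': "0 < e'" "e' \<le> e" "0 < phie \<beta>0 - e'" using e f0 by (auto simp: e'_def)
    have p1: "Df \<beta>0 (phie \<beta>0 + e') > 0" using Dz(1)[OF b0' S_pos[OF f0(1)] f0(2)] e' by simp
    have p2: "Df \<beta>0 (phie \<beta>0 - e') < 0" using Dz(2)[OF b0' S_pos[OF f0(1)] f0(2)] e' by simp
    obtain d1 where d1: "d1 > 0" "\<forall>\<beta>. \<bar>\<beta> - \<beta>0\<bar> < d1 \<longrightarrow> Df \<beta> (phie \<beta>0 + e') > 0" using D_near[OF p1] by blast
    obtain d2 where d2: "d2 > 0" "\<forall>\<beta>. \<bar>\<beta> - \<beta>0\<bar> < d2 \<longrightarrow> Df \<beta> (phie \<beta>0 - e') < 0" using D_near2[OF p2] by blast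
    show ?thesis
    proof (intro exI[of _ "min (min d1 d2) (bt - \<beta>0)"] conjI ballI impI)
      fix \<beta> assume b: "\<beta> \<in> {bc<..}" "dist \<beta> \<beta>0 < min (min d1 d2) (bt - \<beta>0)"
      then have bb: "bc < \<beta>" "\<beta> < bt" by (auto simp: dist_real_def)
      have "Df \<beta> (phie \<beta>0 + e') > 0" "Df \<beta> (phie \<beta>0 - e') < 0" using d1 d2 b by (auto simp: dist_real_def)
      then have "phie \<beta> < phie \<beta>0 + e'" "phie \<beta>0 - e' < phie \<beta>"
        using D_trap[OF phie(2)[OF bb]] D_trap2[OF phie(2)[OF bb]] by auto
      then show "dist (phie \<beta>) (phie \<beta>0) < e" using e' by (simp add: dist_real_def abs_less_iff)
    qed (use d1 d2 lt in auto)
  next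
    case False
    show ?thesis
    proof (cases "\<beta>0 = bt")
      case True
      have f0: "phie \<beta>0 = 0" using True phie_ge by simp
      have p1: "Df bt e > 0" using E_c2[OF e] .
      obtain d1 where d1: "d1 > 0" "\<forall>\<beta>. \<bar>\<beta> - bt\<bar> < d1 \<longrightarrow> Df \<beta> e > 0" using D_near[OF p1] by blast
      show ?thesis
      proof (intro exI[of _ d1] conjI ballI impI)
        fix \<beta> assume b: "\<beta> \<in> {bc<..}" "dist \<beta> \<beta>0 < d1"
        show "dist (phie \<beta>) (phie \<beta>0) < e"
        proof (cases "\<beta> < bt")
          case True
          have bb: "bc < \<beta>" using b by simp
          have "Df \<beta> e > 0" using d1 b True \<open>\<beta>0 = bt\<close> by (auto simp: dist_real_def)
          then have "phie \<beta> < e" using D_trap[OF phie(2)[OF bb True]] by auto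
          moreover have "0 < phie \<beta>" using phie(1)[OF bb True] .
          ultimately show ?thesis using f0 by (simp add: dist_real_def)
        next
          case False then show ?thesis using f0 phie_ge e by simp
        qed
      qed (use d1 in auto)
    next
      case False
      then have gt: "bt < \<beta>0" using \<open>\<not> \<beta>0 < bt\<close> by simp
      show ?thesis
      proof (intro exI[of _ "\<beta>0 - bt"] conjI ballI impI)
        fix \<beta> assume "\<beta> \<in> {bc<..}" "dist \<beta> \<beta>0 < \<beta>0 - bt"
        then have "bt \<le> \<beta>" by (auto simp: dist_real_def)
        then show "dist (phie \<beta>) (phie \<beta>0) < e" using phie_ge gt e by simp
      qed (use gt in auto)
    qed
  qed
qed

lemma phie_lim: "(phie \<longlongrightarrow> hs) (at_right bc)"
  unfolding tendsto_iff
proof (intro allI impI)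
  fix e :: real assume e: "0 < e"
  obtain b where b: "b > bc" "\<forall>\<beta>. bc < \<beta> \<longrightarrow> \<beta> < b \<longrightarrow> Df \<beta> (hs + e) > 0 \<and> Df \<beta> (hs - e) < 0"
    using D_near_bc[OF e] by blast
  show "eventually (\<lambda>\<beta>. dist (phie \<beta>) hs < e) (at_right bc)"
  proof (rule ev_at_right_real, intro exI[of _ "min b bt"] conjI allI impI)
    fix \<beta> assume bb: "bc < \<beta>" "\<beta> < min b bt"
    then have bb': "bc < \<beta>" "\<beta> < bt" by auto
    then have "phie \<beta> < hs + e" "hs - e < phie \<beta>"
      using b(2) bb D_trap[OF phie(2)[OF bb']] D_trap2[OF phie(2)[OF bb']] by auto
    then show "dist (phie \<beta>) hs < e" by (simp add: dist_real_def abs_less_iff)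
  qed (use b bc_lt_bt in auto)
qed

end

theorem mainTheorem11:
  fixes p :: nat
  assumes "p \<ge> 3"
  shows "beta_check p < beta_tilde p \<and>
    (even p \<longrightarrow>
      (\<exists>\<phi> :: real \<Rightarrow> real.
         continuous_on {beta_check p<..} \<phi> \<and>
         (\<forall>\<beta> > beta_check p. \<phi> \<beta> \<ge> 0) \<and>
         (\<forall>\<beta>1 \<beta>2. beta_check p < \<beta>1 \<and> \<beta>1 < \<beta>2 \<and> \<beta>2 < beta_tilde p \<longrightarrow> \<phi> \<beta>2 < \<phi> \<beta>1) \<and>
         (\<forall>\<beta> \<ge> beta_tilde p. \<phi> \<beta> = 0) \<and>
         Cplus p = {(\<beta>, h). \<beta> > beta_check p \<and> \<beta> \<noteq> beta_tilde p \<and> (h = \<phi> \<beta> \<or> h = - \<phi> \<beta>)} \<and>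
         (\<phi> \<longlongrightarrow> artanh (sqrt ((real p - 2) / real p))
               - real p * beta_check p * sqrt ((real p - 2) / real p) ^ (p - 1)) (at_right (beta_check p)))) \<and>
    (odd p \<longrightarrow>
      (\<exists>\<phi> :: real \<Rightarrow> real.
         continuous_on {beta_check p<..} \<phi> \<and>
         (\<forall>\<beta>1 \<beta>2. beta_check p < \<beta>1 \<and> \<beta>1 < \<beta>2 \<longrightarrow> \<phi> \<beta>2 < \<phi> \<beta>1) \<and>
         \<phi> (beta_tilde p) = 0 \<and>
         filterlim \<phi> at_bot at_top \<and>
         Cplus p = {(\<beta>, h). \<beta> > beta_check p \<and> h = \<phi> \<beta>} \<and>
         (\<phi> \<longlongrightarrow> artanh (sqrt ((real p - 2) / real p))
               - real p * beta_check p * sqrt ((real p - 2) / real p) ^ (p - 1)) (at_right (beta_check p))))"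
proof -
  interpret PP p using assms by unfold_locales
  have hs_eq: "artanh (sqrt ((real p - 2) / real p)) - real p * beta_check p * sqrt ((real p - 2) / real p) ^ (p - 1) = hs"
    by (simp add: hs_def ms_def)
  have ev: "even p \<longrightarrow> (\<exists>\<phi> :: real \<Rightarrow> real.
         continuous_on {beta_check p<..} \<phi> \<and>
         (\<forall>\<beta> > beta_check p. \<phi> \<beta> \<ge> 0) \<and>
         (\<forall>\<beta>1 \<beta>2. beta_check p < \<beta>1 \<and> \<beta>1 < \<beta>2 \<and> \<beta>2 < beta_tilde p \<longrightarrow> \<phi> \<beta>2 < \<phi> \<beta>1) \<and>
         (\<forall>\<beta> \<ge> beta_tilde p. \<phi> \<beta> = 0) \<and>
         Cplus p = {(\<beta>, h). \<beta> > beta_check p \<and> \<beta> \<noteq> beta_tilde p \<and> (h = \<phi> \<beta> \<or> h = - \<phi> \<beta>)} \<and>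
         (\<phi> \<longlongrightarrow> artanh (sqrt ((real p - 2) / real p))
               - real p * beta_check p * sqrt ((real p - 2) / real p) ^ (p - 1)) (at_right (beta_check p)))"
  proof
    assume e: "even p"
    interpret PE p using assms e by unfold_locales
    show "\<exists>\<phi> :: real \<Rightarrow> real.
         continuous_on {beta_check p<..} \<phi> \<and>
         (\<forall>\<beta> > beta_check p. \<phi> \<beta> \<ge> 0) \<and>
         (\<forall>\<beta>1 \<beta>2. beta_check p < \<beta>1 \<and> \<beta>1 < \<beta>2 \<and> \<beta>2 < beta_tilde p \<longrightarrow> \<phi> \<beta>2 < \<phi> \<beta>1) \<and>
         (\<forall>\<beta> \<ge> beta_tilde p. \<phi> \<beta> = 0) \<and>
         Cplus p = {(\<beta>, h). \<beta> > beta_check p \<and> \<beta> \<noteq> beta_tilde p \<and> (h = \<phi> \<beta> \<or> h = - \<phi> \<beta>)} \<and>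
         (\<phi> \<longlongrightarrow> artanh (sqrt ((real p - 2) / real p))
               - real p * beta_check p * sqrt ((real p - 2) / real p) ^ (p - 1)) (at_right (beta_check p))"
      unfolding hs_eq
      using phie_cont phie_nonneg phie_dec phie_ge Cplus_even phie_lim
      by (intro exI[of _ phie]) blast
  qed
  have od: "odd p \<longrightarrow> (\<exists>\<phi> :: real \<Rightarrow> real.
         continuous_on {beta_check p<..} \<phi> \<and>
         (\<forall>\<beta>1 \<beta>2. beta_check p < \<beta>1 \<and> \<beta>1 < \<beta>2 \<longrightarrow> \<phi> \<beta>2 < \<phi> \<beta>1) \<and>
         \<phi> (beta_tilde p) = 0 \<and>
         filterlim \<phi> at_bot at_top \<and>
         Cplus p = {(\<beta>, h). \<beta> > beta_check p \<and> h = \<phi> \<beta>} \<and>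
         (\<phi> \<longlongrightarrow> artanh (sqrt ((real p - 2) / real p))
               - real p * beta_check p * sqrt ((real p - 2) / real p) ^ (p - 1)) (at_right (beta_check p)))"
  proof
    assume o: "odd p"
    interpret PO p using assms o by unfold_locales
    show "\<exists>\<phi> :: real \<Rightarrow> real.
         continuous_on {beta_check p<..} \<phi> \<and>
         (\<forall>\<beta>1 \<beta>2. beta_check p < \<beta>1 \<and> \<beta>1 < \<beta>2 \<longrightarrow> \<phi> \<beta>2 < \<phi> \<beta>1) \<and>
         \<phi> (beta_tilde p) = 0 \<and>
         filterlim \<phi> at_bot at_top \<and>
         Cplus p = {(\<beta>, h). \<beta> > beta_check p \<and> h = \<phi> \<beta>} \<and>
         (\<phi> \<longlongrightarrow> artanh (sqrt ((real p - 2) / real p))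
               - real p * beta_check p * sqrt ((real p - 2) / real p) ^ (p - 1)) (at_right (beta_check p))"
      unfolding hs_eq
      using phio_cont phio_dec phio_bt phio_bot Cplus_odd phio_lim
      by (intro exI[of _ phio]) blast
  qed
  show ?thesis using bc_lt_bt ev od by blast
qed

end
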